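(* In the $d$-dimensional setting with $v\equiv0$, $\beta\ge0$, $\zeta_l>0$, $\zeta_r>0$ and $N_1\ge2$, $$\mathcal{J}(N_1,\dots,N_d)=\frac{2(\alpha_{in}^l\alpha_{out}^r-\alpha_{out}^l\alpha_{in}^r)\prod_{n=2}^dN_n}{\big(\beta(N_1-1)+\zeta_l+\zeta_r\big)\zeta_l\zeta_r+\zeta_l+\zeta_r}.$$
   Context: Let $d\ge1$ and $N_1,\dots,N_d\in\mathbb{N}$. Let $\mathfrak L=\{1,\dots,N_1\}\times\cdots\times\{1,\dots,N_d\}$; $NN(\nu)$ is the set of nearest neighbours of $\nu$ in $\mathfrak L$. For $i=1,\dots,N_1$ let $M_i=\{\nu\in\mathfrak L:\nu_1=i\}$, and for $\nu\notin M_{N_1}$ let $\nu_+=(\nu_1+1,\nu_2,\dots,\nu_d)$. Let $\{e_\nu\}$ be the standard basis of $\mathbb{C}^{|\mathfrak L|}$, $p_\nu=|e_\nu\rangle\langle e_\nu|$, $P_1=\sum_{\nu\in M_1}p_\nu$, $P_{N_1}=\sum_{\nu\in M_{N_1}}p_\nu$. Given a real $v$ on $\mathfrak L$, $(h\psi)(\nu)=-\sum_{\mu\in NN(\nu)}\psi(\mu)+v(\nu)\psi(\nu)$. Let $\alpha_{in}^l,\alpha_{out}^l,\alpha_{in}^r,\alpha_{out}^r,\beta\ge0$, $\zeta_l=\alpha_{in}^l+\alpha_{out}^l$, $\zeta_r=\alpha_{in}^r+\alpha_{out}^r$. Define $l(a)=-i[h,a]-\zeta_l\{P_1,a\}-\zeta_r\{P_{N_1},a\}+\beta\left(\sum_{\nu\in\mathfrak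 L}p_\nu ap_\nu-a\right)$ on $M_{|\mathfrak L|}(\mathbb{C})$, $R_\infty=\int_0^\infty e^{tl}(2\alpha_{in}^lP_1+2\alpha_{in}^rP_{N_1})\,dt$, and the stationary current $\mathcal{J}(N_1,\dots,N_d)=\sum_{\nu\in M_1}2\,\mathrm{Im}\langle e_{\nu_+},R_\infty e_\nu\rangle$. *)

theory Defs
  imports "HOL-Analysis.Analysis"
begin

text \<open>Sites of the lattice are lists nu of length d; coordinate k (0-based list index)
  is the paper's coordinate k+1 and ranges over 1..N_(k+1).\<close>

type_synonym site = "nat list"
type_synonym cmat = "site \<Rightarrow> site \<Rightarrow> complex"
type_synonym cvec = "site \<Rightarrow> complex"

definition lattice :: "nat list \<Rightarrow> site set" where
  "lattice N = {\<nu>. length \<nu> = length N \<and> (\<forall>i<length N. 1 \<le> \<nu>!i \<and> \<nu>!i \<le> N!i)}"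

definition NN :: "nat list \<Rightarrow> site \<Rightarrow> site set" where
  "NN N \<nu> = {\<mu> \<in> lattice N. \<exists>i<length N. (\<mu>!i = \<nu>!i + 1 \<or> \<nu>!i = \<mu>!i + 1)
                 \<and> (\<forall>j<length N. j \<noteq> i \<longrightarrow> \<mu>!j = \<nu>!j)}"

definition slab :: "nat list \<Rightarrow> nat \<Rightarrow> site set" where
  "slab N i = {\<nu> \<in> lattice N. \<nu>!0 = i}"

definition shift :: "site \<Rightarrow> site" where
  "shift \<nu> = \<nu>[0 := \<nu>!0 + 1]"

definition basis_vec :: "site \<Rightarrow> cvec" where
  "basis_vec \<nu> = (\<lambda>\<mu>. if \<mu> = \<nu> then 1 else 0)"

definition proj :: "site \<Rightarrow> cmat" where
  "proj \<nu> = (\<lambda>\<mu> \<kappa>. if \<mu> = \<nu> \<and> \<kappa> = \<nu> then 1 else 0)"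

definition mmult :: "nat list \<Rightarrow> cmat \<Rightarrow> cmat \<Rightarrow> cmat" where
  "mmult N a b = (\<lambda>\<mu> \<kappa>. \<Sum>\<xi>\<in>lattice N. a \<mu> \<xi> * b \<xi> \<kappa>)"

definition mvec :: "nat list \<Rightarrow> cmat \<Rightarrow> cvec \<Rightarrow> cvec" where
  "mvec N a x = (\<lambda>\<mu>. \<Sum>\<kappa>\<in>lattice N. a \<mu> \<kappa> * x \<kappa>)"

definition cinner :: "nat list \<Rightarrow> cvec \<Rightarrow> cvec \<Rightarrow> complex" where
  "cinner N x y = (\<Sum>\<mu>\<in>lattice N. cnj (x \<mu>) * y \<mu>)"

definition msum :: "'i set \<Rightarrow> ('i \<Rightarrow> cmat) \<Rightarrow> cmat" where
  "msum A f = (\<lambda>\<mu> \<kappa>. \<Sum>x\<in>A. f x \<mu> \<kappa>)"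

definition Pleft :: "nat list \<Rightarrow> cmat" where
  "Pleft N = msum (slab N 1) proj"

definition Pright :: "nat list \<Rightarrow> cmat" where
  "Pright N = msum (slab N (N!0)) proj"

definition ham :: "nat list \<Rightarrow> (site \<Rightarrow> real) \<Rightarrow> cmat" where
  "ham N v = (\<lambda>\<nu> \<mu>. if \<nu> \<in> lattice N \<and> \<mu> \<in> lattice N then
       - (if \<mu> \<in> NN N \<nu> then 1 else 0) + (if \<mu> = \<nu> then complex_of_real (v \<nu>) else 0)
     else 0)"

definition lindblad :: "nat list \<Rightarrow> (site \<Rightarrow> real) \<Rightarrow> real \<Rightarrow> real \<Rightarrow> real \<Rightarrow> cmat \<Rightarrow> cmat" where
  "lindblad N v \<zeta>l \<zeta>r \<beta> a = (\<lambda>\<mu> \<kappa>.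
      - \<i> * (mmult N (ham N v) a \<mu> \<kappa> - mmult N a (ham N v) \<mu> \<kappa>)
      - complex_of_real \<zeta>l * (mmult N (Pleft N) a \<mu> \<kappa> + mmult N a (Pleft N) \<mu> \<kappa>)
      - complex_of_real \<zeta>r * (mmult N (Pright N) a \<mu> \<kappa> + mmult N a (Pright N) \<mu> \<kappa>)
      + complex_of_real \<beta> * (msum (lattice N) (\<lambda>\<nu>. mmult N (mmult N (proj \<nu>) a) (proj \<nu>)) \<mu> \<kappa> - a \<mu> \<kappa>))"

definition exp_lindblad ::
  "nat list \<Rightarrow> (site \<Rightarrow> real) \<Rightarrow> real \<Rightarrow> real \<Rightarrow> real \<Rightarrow> real \<Rightarrow> cmat \<Rightarrow> cmat" where
  "exp_lindblad N v \<zeta>l \<zeta>r \<beta> t a = (\<lambda>\<mu> \<kappa>.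
     (\<Sum>k. complex_of_real (t ^ k / fact k) * ((lindblad N v \<zeta>l \<zeta>r \<beta> ^^ k) a) \<mu> \<kappa>))"

definition R_inf ::
  "nat list \<Rightarrow> (site \<Rightarrow> real) \<Rightarrow> real \<Rightarrow> real \<Rightarrow> real \<Rightarrow> real \<Rightarrow> real \<Rightarrow> cmat" where
  "R_inf N v ainl aoutl ainr aoutr \<beta> = (\<lambda>\<mu> \<kappa>.
     integral {0..} (\<lambda>t. exp_lindblad N v (ainl + aoutl) (ainr + aoutr) \<beta> t
        (\<lambda>\<mu>' \<kappa>'. 2 * complex_of_real ainl * Pleft N \<mu>' \<kappa>' + 2 * complex_of_real ainr * Pright N \<mu>' \<kappa>')
        \<mu> \<kappa>))"

definition current ::
  "nat list \<Rightarrow> (site \<Rightarrow> real) \<Rightarrow> real \<Rightarrow> real \<Rightarrow> real \<Rightarrow> real \<Rightarrow> real \<Rightarrow> real" where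
  "current N v ainl aoutl ainr aoutr \<beta> =
     (\<Sum>\<nu>\<in>slab N 1. 2 * Im (cinner N (basis_vec (shift \<nu>))
                      (mvec N (R_inf N v ainl aoutl ainr aoutr \<beta>) (basis_vec \<nu>))))"

end

theory Submission
  imports Defs
begin



lemma lattice_Nil: "lattice [] = {[]}"
  by (auto simp: lattice_def)

lemma lattice_Cons: "lattice (m # M) = (\<lambda>(a,t). a # t) ` ({1..m} \<times> lattice M)"
proof (intro set_eqI iffI)
  fix x assume x: "x \<in> lattice (m # M)"
  then obtain a t where xa: "x = a # t" by (cases x) (auto simp: lattice_def)
  have "a \<in> {1..m}" using x xa by (auto simp: lattice_def dest: spec[of _ 0])
  moreover have "t \<in> lattice M" using x xa unfolding lattice_def
    by (auto dest!: spec[of _ "Suc _"])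
  ultimately show "x \<in> (\<lambda>(a,t). a # t) ` ({1..m} \<times> lattice M)" using xa by force
next
  fix x assume "x \<in> (\<lambda>(a,t). a # t) ` ({1..m} \<times> lattice M)"
  then obtain a t where "x = a # t" "a \<in> {1..m}" "t \<in> lattice M" by auto
  then show "x \<in> lattice (m # M)" unfolding lattice_def
    by (auto simp: nth_Cons split: nat.splits)
qed

lemma finite_lattice: "finite (lattice N)"
  by (induction N) (auto simp: lattice_Nil lattice_Cons)

lemma card_lattice: "card (lattice N) = prod_list N"
proof (induction N)
  case Nil then show ?case by (simp add: lattice_Nil)
next
  case (Cons m M)
  have "inj_on (\<lambda>(a,t). a # t) ({1..m} \<times> lattice M)" by (auto simp: inj_on_def)
  then show ?case by (simp add: lattice_Cons card_image card_cartesian_product Cons)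
qed

lemma NN_sub: "NN N \<nu> \<subseteq> lattice N" by (auto simp: NN_def)

lemma finite_NN: "finite (NN N \<nu>)" using finite_subset[OF NN_sub finite_lattice] .

lemma NN_irrefl: "\<nu> \<notin> NN N \<nu>" by (auto simp: NN_def)

lemma NN_sym: "\<nu> \<in> lattice N \<Longrightarrow> \<mu> \<in> NN N \<nu> \<Longrightarrow> \<nu> \<in> NN N \<mu>"
  unfolding NN_def by (simp, metis)

lemma NN_sym_iff: "\<nu> \<in> lattice N \<Longrightarrow> \<mu> \<in> lattice N \<Longrightarrow> \<mu> \<in> NN N \<nu> \<longleftrightarrow> \<nu> \<in> NN N \<mu>"
  using NN_sym by blast

lemma lattice_length: "\<nu> \<in> lattice N \<Longrightarrow> length \<nu> = length N" by (simp add: lattice_def)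

lemma lattice_bounds: "\<nu> \<in> lattice N \<Longrightarrow> i < length N \<Longrightarrow> 1 \<le> \<nu>!i \<and> \<nu>!i \<le> N!i"
  by (simp add: lattice_def)

definition unshift :: "site \<Rightarrow> site" where
  "unshift \<nu> = \<nu>[0 := \<nu>!0 - 1]"

context
  fixes N :: "nat list"
  assumes lenN: "length N \<ge> 1"
begin

lemma N_ne: "N \<noteq> []" "0 < length N" using lenN by auto

lemma len_pos: "\<nu> \<in> lattice N \<Longrightarrow> 0 < length \<nu>"
  using N_ne by (simp add: lattice_def)

lemma first_bounds: "\<nu> \<in> lattice N \<Longrightarrow> 1 \<le> \<nu>!0 \<and> \<nu>!0 \<le> N!0"
  using N_ne by (simp add: lattice_def)

lemma shift_nth: "\<nu> \<in> lattice N \<Longrightarrow> shift \<nu> ! i = (if i = 0 then \<nu>!0 + 1 else \<nu>!i)"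
  using len_pos by (auto simp: shift_def nth_list_update)

lemma unshift_nth: "\<nu> \<in> lattice N \<Longrightarrow> unshift \<nu> ! i = (if i = 0 then \<nu>!0 - 1 else \<nu>!i)"
  using len_pos by (auto simp: unshift_def nth_list_update)

lemma length_shift[simp]: "length (shift \<nu>) = length \<nu>" by (simp add: shift_def)
lemma length_unshift[simp]: "length (unshift \<nu>) = length \<nu>" by (simp add: unshift_def)

lemma shift_in_lattice: "\<nu> \<in> lattice N \<Longrightarrow> shift \<nu> \<in> lattice N \<longleftrightarrow> \<nu>!0 < N!0"
proof -
  assume v: "\<nu> \<in> lattice N"
  show ?thesis
  proof
    assume "shift \<nu> \<in> lattice N"
    then have "shift \<nu> ! 0 \<le> N!0" using first_bounds by blast
    then show "\<nu>!0 < N!0" using shift_nth[OF v, of 0] by simp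
  next
    assume a: "\<nu>!0 < N!0"
    show "shift \<nu> \<in> lattice N" unfolding lattice_def
      using v a by (auto simp: shift_nth[OF v] lattice_def)
  qed
qed

lemma unshift_in_lattice: "\<nu> \<in> lattice N \<Longrightarrow> unshift \<nu> \<in> lattice N \<longleftrightarrow> \<nu>!0 \<ge> 2"
proof -
  assume v: "\<nu> \<in> lattice N"
  have b: "1 \<le> \<nu>!0" "\<nu>!0 \<le> N!0" using first_bounds[OF v] by auto
  show ?thesis
  proof
    assume "unshift \<nu> \<in> lattice N"
    then have "1 \<le> unshift \<nu> ! 0" using first_bounds by blast
    then show "\<nu>!0 \<ge> 2" using unshift_nth[OF v, of 0] by simp
  next
    assume a: "\<nu>!0 \<ge> 2"
    show "unshift \<nu> \<in> lattice N" unfolding lattice_def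
      using v a b by (auto simp: unshift_nth[OF v] lattice_def)
  qed
qed

lemma shift_unshift: "\<nu> \<in> lattice N \<Longrightarrow> shift (unshift \<nu>) = \<nu>"
  using len_pos first_bounds[of \<nu>] unfolding shift_def unshift_def
  by (auto intro!: nth_equalityI simp: nth_list_update)

lemma unshift_shift: "\<nu> \<in> lattice N \<Longrightarrow> unshift (shift \<nu>) = \<nu>"
  using len_pos unfolding shift_def unshift_def
  by (auto intro!: nth_equalityI simp: nth_list_update)

lemma shift_inj: "\<nu> \<in> lattice N \<Longrightarrow> \<mu> \<in> lattice N \<Longrightarrow> shift \<nu> = shift \<mu> \<longleftrightarrow> \<nu> = \<mu>"
  by (metis unshift_shift)

lemma NN_first: "\<mu> \<in> lattice N \<Longrightarrow> \<xi> \<in> NN N \<mu> \<Longrightarrow> \<xi>!0 = \<mu>!0 \<or> \<xi>!0 = \<mu>!0 + 1 \<or> \<mu>!0 = \<xi>!0 + 1"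
proof -
  assume "\<xi> \<in> NN N \<mu>"
  then obtain i where i: "i < length N" "\<xi>!i = \<mu>!i + 1 \<or> \<mu>!i = \<xi>!i + 1"
    "\<forall>j<length N. j \<noteq> i \<longrightarrow> \<xi>!j = \<mu>!j" unfolding NN_def by blast
  show ?thesis
  proof (cases "i = 0")
    case True then show ?thesis using i by auto
  next
    case False then show ?thesis using i(3) N_ne by auto
  qed
qed

lemma NN_up: "\<mu> \<in> lattice N \<Longrightarrow> \<xi> \<in> NN N \<mu> \<Longrightarrow> \<xi>!0 = \<mu>!0 + 1 \<Longrightarrow> \<xi> = shift \<mu>"
proof -
  assume m: "\<mu> \<in> lattice N" and x: "\<xi> \<in> NN N \<mu>" and e: "\<xi>!0 = \<mu>!0 + 1"
  then obtain i where i: "i < length N" "\<xi>!i = \<mu>!i + 1 \<or> \<mu>!i = \<xi>!i + 1"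
    "\<forall>j<length N. j \<noteq> i \<longrightarrow> \<xi>!j = \<mu>!j" unfolding NN_def by blast
  have i0: "i = 0" using i(3) e N_ne by (metis n_not_Suc_n Suc_eq_plus1)
  have lx: "length \<xi> = length N" using x NN_sub lattice_length by blast
  show ?thesis
  proof (rule nth_equalityI)
    show "length \<xi> = length (shift \<mu>)" using lx m lattice_length by auto
    fix j assume "j < length \<xi>"
    then show "\<xi>!j = shift \<mu> ! j" using i(3) i0 e lx by (auto simp: shift_nth[OF m])
  qed
qed

lemma shift_NN: "\<mu> \<in> lattice N \<Longrightarrow> shift \<mu> \<in> lattice N \<Longrightarrow> shift \<mu> \<in> NN N \<mu>"
  using lenN unfolding NN_def
  by (auto intro!: exI[of _ 0] simp: shift_nth)

lemma NN_shift_shift: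
  assumes m: "\<mu> \<in> lattice N" and x: "\<xi> \<in> lattice N" and "shift \<mu> \<in> lattice N" "shift \<xi> \<in> lattice N"
  shows "shift \<xi> \<in> NN N (shift \<mu>) \<longleftrightarrow> \<xi> \<in> NN N \<mu>"
proof -
  have eq: "\<And>i. (shift \<xi> ! i = shift \<mu> ! i + 1 \<or> shift \<mu> ! i = shift \<xi> ! i + 1) \<longleftrightarrow>
                 (\<xi> ! i = \<mu> ! i + 1 \<or> \<mu> ! i = \<xi> ! i + 1)"
    by (auto simp: shift_nth[OF m] shift_nth[OF x])
  have eq2: "\<And>j. shift \<xi> ! j = shift \<mu> ! j \<longleftrightarrow> \<xi> ! j = \<mu> ! j"
    by (auto simp: shift_nth[OF m] shift_nth[OF x])
  show ?thesis unfolding NN_def mem_Collect_eq eq eq2 using assms by simp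
qed

end



locale lind =
  fixes N :: "nat list" and zl zr b :: real
  assumes lenN: "length N \<ge> 1" and N0: "N!0 \<ge> 2" and Npos: "\<forall>i<length N. N!i \<ge> 1"
    and zl: "zl > 0" and zr: "zr > 0" and bpos: "b \<ge> 0"
begin

abbreviation "Lt \<equiv> lattice N"
abbreviation "S1 \<equiv> slab N 1"
abbreviation "SN \<equiv> slab N (N!0)"

lemmas shift_nth' = shift_nth[OF lenN] and unshift_nth' = unshift_nth[OF lenN]
  and shift_in_lattice' = shift_in_lattice[OF lenN] and unshift_in_lattice' = unshift_in_lattice[OF lenN]
  and shift_unshift' = shift_unshift[OF lenN] and unshift_shift' = unshift_shift[OF lenN]
  and shift_inj' = shift_inj[OF lenN] and NN_first' = NN_first[OF lenN] and NN_up' = NN_up[OF lenN]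
  and shift_NN' = shift_NN[OF lenN] and NN_shift_shift' = NN_shift_shift[OF lenN]
  and first_bounds' = first_bounds[OF lenN]

lemma slab_sub: "slab N i \<subseteq> Lt" by (auto simp: slab_def)
lemma finite_slab: "finite (slab N i)" using finite_subset[OF slab_sub finite_lattice] .
lemma finL: "finite Lt" by (rule finite_lattice)

lemma msum_proj: "msum (slab N i) proj \<mu> \<kappa> = (if \<mu> = \<kappa> \<and> \<mu> \<in> slab N i then 1 else 0)"
proof -
  have "msum (slab N i) proj \<mu> \<kappa> = (\<Sum>x\<in>slab N i. if \<mu> = \<kappa> then (if x = \<mu> then 1 else 0) else 0)"
    unfolding msum_def proj_def by (intro sum.cong) auto
  also have "\<dots> = (if \<mu> = \<kappa> \<and> \<mu> \<in> slab N i then 1 else 0)"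
    using finite_slab by (cases "\<mu> = \<kappa>") (auto simp: sum.delta')
  finally show ?thesis .
qed

lemma mmult_slab_left: "mmult N (msum (slab N i) proj) a \<mu> \<kappa> = (if \<mu> \<in> slab N i then a \<mu> \<kappa> else 0)"
proof -
  have "mmult N (msum (slab N i) proj) a \<mu> \<kappa> = (\<Sum>\<xi>\<in>Lt. if \<xi> = \<mu> then (if \<mu> \<in> slab N i then a \<mu> \<kappa> else 0) else 0)"
    unfolding mmult_def msum_proj by (intro sum.cong) auto
  also have "\<dots> = (if \<mu> \<in> slab N i then a \<mu> \<kappa> else 0)"
    using finL slab_sub by (auto simp: sum.delta')
  finally show ?thesis .
qed

lemma mmult_slab_right: "mmult N a (msum (slab N i) proj) \<mu> \<kappa> = (if \<kappa> \<in> slab N i then a \<mu> \<kappa> else 0)"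
proof -
  have "mmult N a (msum (slab N i) proj) \<mu> \<kappa> = (\<Sum>\<xi>\<in>Lt. if \<xi> = \<kappa> then (if \<kappa> \<in> slab N i then a \<mu> \<kappa> else 0) else 0)"
    unfolding mmult_def msum_proj by (intro sum.cong) auto
  also have "\<dots> = (if \<kappa> \<in> slab N i then a \<mu> \<kappa> else 0)"
    using finL slab_sub by (auto simp: sum.delta')
  finally show ?thesis .
qed

lemma mm_proj_left: "mmult N (proj \<nu>) a \<mu> \<xi> = (if \<mu> = \<nu> \<and> \<nu> \<in> Lt then a \<nu> \<xi> else 0)"
proof -
  have "mmult N (proj \<nu>) a \<mu> \<xi> = (\<Sum>\<eta>\<in>Lt. if \<eta> = \<nu> then (if \<mu> = \<nu> then a \<nu> \<xi> else 0) else 0)"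
    unfolding mmult_def proj_def by (intro sum.cong) auto
  then show ?thesis using finL by (simp add: sum.delta')
qed

lemma mm_proj_right: "mmult N X (proj \<nu>) \<mu> \<kappa> = (if \<kappa> = \<nu> \<and> \<nu> \<in> Lt then X \<mu> \<nu> else 0)"
proof -
  have "mmult N X (proj \<nu>) \<mu> \<kappa> = (\<Sum>\<eta>\<in>Lt. if \<eta> = \<nu> then (if \<kappa> = \<nu> then X \<mu> \<nu> else 0) else 0)"
    unfolding mmult_def proj_def by (intro sum.cong) auto
  then show ?thesis using finL by (simp add: sum.delta')
qed

lemma deph_eq: "msum Lt (\<lambda>\<nu>. mmult N (mmult N (proj \<nu>) a) (proj \<nu>)) \<mu> \<kappa> = (if \<mu> = \<kappa> \<and> \<mu> \<in> Lt then a \<mu> \<mu> else 0)"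
proof -
  have "msum Lt (\<lambda>\<nu>. mmult N (mmult N (proj \<nu>) a) (proj \<nu>)) \<mu> \<kappa> =
     (\<Sum>\<nu>\<in>Lt. if \<nu> = \<mu> then (if \<mu> = \<kappa> then a \<mu> \<mu> else 0) else 0)"
    unfolding msum_def mm_proj_right mm_proj_left by (intro sum.cong) auto
  then show ?thesis using finL by (simp add: sum.delta')
qed

lemma ham0: "ham N (\<lambda>_. 0) \<mu> \<xi> = (if \<mu> \<in> Lt \<and> \<xi> \<in> NN N \<mu> then -1 else 0)"
  unfolding ham_def using NN_sub NN_irrefl by auto

lemma mm_ham_left: "mmult N (ham N (\<lambda>_. 0)) a \<mu> \<kappa> = (if \<mu> \<in> Lt then - (\<Sum>\<xi>\<in>NN N \<mu>. a \<xi> \<kappa>) else 0)"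
proof (cases "\<mu> \<in> Lt")
  case True
  have "mmult N (ham N (\<lambda>_. 0)) a \<mu> \<kappa> = (\<Sum>\<xi>\<in>Lt. if \<xi> \<in> NN N \<mu> then - a \<xi> \<kappa> else 0)"
    unfolding mmult_def ham0 using True by (intro sum.cong) auto
  also have "\<dots> = (\<Sum>\<xi>\<in>Lt \<inter> NN N \<mu>. - a \<xi> \<kappa>)" using finL by (simp add: sum.inter_restrict)
  also have "Lt \<inter> NN N \<mu> = NN N \<mu>" using NN_sub by auto
  finally show ?thesis using True by (simp add: sum_negf)
qed (simp add: mmult_def ham0)

lemma mm_ham_right: "mmult N a (ham N (\<lambda>_. 0)) \<mu> \<kappa> = (if \<kappa> \<in> Lt then - (\<Sum>\<xi>\<in>NN N \<kappa>. a \<mu> \<xi>) else 0)"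
proof (cases "\<kappa> \<in> Lt")
  case True
  have "mmult N a (ham N (\<lambda>_. 0)) \<mu> \<kappa> = (\<Sum>\<xi>\<in>Lt. if \<xi> \<in> NN N \<kappa> then - a \<mu> \<xi> else 0)"
    unfolding mmult_def ham0 using True NN_sym_iff by (intro sum.cong) auto
  also have "\<dots> = (\<Sum>\<xi>\<in>Lt \<inter> NN N \<kappa>. - a \<mu> \<xi>)" using finL by (simp add: sum.inter_restrict)
  also have "Lt \<inter> NN N \<kappa> = NN N \<kappa>" using NN_sub by auto
  finally show ?thesis using True by (simp add: sum_negf)
next
  case False
  then have "\<forall>\<xi>. \<kappa> \<notin> NN N \<xi>" using NN_sub by blast
  then show ?thesis unfolding mmult_def ham0 using False by auto
qed

definition hs :: "cmat \<Rightarrow> cmat" where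
  "hs a = (\<lambda>\<mu> \<kappa>. (if \<mu> \<in> Lt then \<Sum>\<xi>\<in>NN N \<mu>. a \<xi> \<kappa> else 0) - (if \<kappa> \<in> Lt then \<Sum>\<xi>\<in>NN N \<kappa>. a \<mu> \<xi> else 0))"

definition lf :: "cmat \<Rightarrow> cmat" where
  "lf a = (\<lambda>\<mu> \<kappa>. \<i> * hs a \<mu> \<kappa>
      - of_real zl * ((if \<mu> \<in> S1 then a \<mu> \<kappa> else 0) + (if \<kappa> \<in> S1 then a \<mu> \<kappa> else 0))
      - of_real zr * ((if \<mu> \<in> SN then a \<mu> \<kappa> else 0) + (if \<kappa> \<in> SN then a \<mu> \<kappa> else 0))
      + of_real b * ((if \<mu> = \<kappa> \<and> \<mu> \<in> Lt then a \<mu> \<mu> else 0) - a \<mu> \<kappa>))"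

lemma l_eq: "lindblad N (\<lambda>_. 0) zl zr b = lf"
proof (intro ext)
  fix a \<mu> \<kappa>
  show "lindblad N (\<lambda>_. 0) zl zr b a \<mu> \<kappa> = lf a \<mu> \<kappa>"
    unfolding lindblad_def lf_def hs_def Pleft_def Pright_def
    by (simp add: mm_ham_left mm_ham_right mmult_slab_left mmult_slab_right deph_eq algebra_simps)
qed

end



context lind begin

definition supp :: "cmat \<Rightarrow> bool" where
  "supp a \<longleftrightarrow> (\<forall>\<mu> \<kappa>. \<mu> \<notin> Lt \<or> \<kappa> \<notin> Lt \<longrightarrow> a \<mu> \<kappa> = 0)"

definition nrm :: "cmat \<Rightarrow> real" where
  "nrm a = (\<Sum>\<mu>\<in>Lt. \<Sum>\<kappa>\<in>Lt. cmod (a \<mu> \<kappa>))"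

lemma nrm_bound: "supp a \<Longrightarrow> cmod (a \<mu> \<kappa>) \<le> nrm a"
proof (cases "\<mu> \<in> Lt \<and> \<kappa> \<in> Lt")
  case True
  have "cmod (a \<mu> \<kappa>) \<le> (\<Sum>\<kappa>\<in>Lt. cmod (a \<mu> \<kappa>))"
    using True finL by (intro member_le_sum) auto
  also have "\<dots> \<le> nrm a" unfolding nrm_def
    using True finL by (intro member_le_sum[where f="\<lambda>\<mu>. \<Sum>\<kappa>\<in>Lt. cmod (a \<mu> \<kappa>)"]) (auto intro: sum_nonneg)
  finally show ?thesis .
next
  case False
  assume "supp a"
  then show ?thesis using False unfolding supp_def nrm_def by (auto intro!: sum_nonneg)
qed

lemma lf_alt: "lf a \<mu> \<kappa> = \<i> * (of_bool (\<mu> \<in> Lt) * (\<Sum>\<xi>\<in>NN N \<mu>. a \<xi> \<kappa>) - of_bool (\<kappa> \<in> Lt) * (\<Sum>\<xi>\<in>NN N \<kappa>. a \<mu> \<xi>))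
      - of_real zl * ((of_bool (\<mu> \<in> S1) + of_bool (\<kappa> \<in> S1)) * a \<mu> \<kappa>)
      - of_real zr * ((of_bool (\<mu> \<in> SN) + of_bool (\<kappa> \<in> SN)) * a \<mu> \<kappa>)
      + of_real b * (of_bool (\<mu> = \<kappa> \<and> \<mu> \<in> Lt) * a \<mu> \<mu> - a \<mu> \<kappa>)"
  unfolding lf_def hs_def of_bool_def by (auto simp: algebra_simps)

lemma lf_add: "lf (\<lambda>\<mu> \<kappa>. a \<mu> \<kappa> + c \<mu> \<kappa>) = (\<lambda>\<mu> \<kappa>. lf a \<mu> \<kappa> + lf c \<mu> \<kappa>)"
  apply (intro ext)
  unfolding lf_alt sum.distrib
  by algebra

lemma lf_diff: "lf (\<lambda>\<mu> \<kappa>. a \<mu> \<kappa> - c \<mu> \<kappa>) = (\<lambda>\<mu> \<kappa>. lf a \<mu> \<kappa> - lf c \<mu> \<kappa>)"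
  apply (intro ext)
  unfolding lf_alt sum_subtractf
  by algebra

lemma lf_scale: "lf (\<lambda>\<mu> \<kappa>. z * a \<mu> \<kappa>) = (\<lambda>\<mu> \<kappa>. z * lf a \<mu> \<kappa>)"
  apply (intro ext)
  unfolding lf_alt sum_distrib_left[symmetric]
  by algebra

lemma lf_zero: "lf (\<lambda>_ _. 0) = (\<lambda>_ _. 0)"
  by (intro ext) (simp only: lf_alt sum.neutral_const mult_zero_right diff_zero add_0 diff_self mult_zero_left)

lemma lf_sum: "finite I \<Longrightarrow> lf (\<lambda>\<mu> \<kappa>. \<Sum>i\<in>I. f i \<mu> \<kappa>) = (\<lambda>\<mu> \<kappa>. \<Sum>i\<in>I. lf (f i) \<mu> \<kappa>)"
proof (induction I rule: finite_induct)
  case empty then show ?case by (simp add: lf_zero)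
next
  case (insert x F)
  then show ?case by (simp add: lf_add)
qed

lemma lf_sums:
  assumes "\<And>\<mu> \<kappa>. (\<lambda>k. f k \<mu> \<kappa>) sums (F \<mu> \<kappa>)"
  shows "(\<lambda>k. lf (f k) \<mu> \<kappa>) sums (lf F \<mu> \<kappa>)"
  unfolding lf_alt
  apply (rule sums_add)
   apply (rule sums_diff)+
     apply (rule sums_mult)
     apply (rule sums_diff)
      apply (rule sums_mult, rule sums_sum, rule assms)
     apply (rule sums_mult, rule sums_sum, rule assms)
    apply (rule sums_mult, rule sums_mult, rule assms)
   apply (rule sums_mult, rule sums_mult, rule assms)
  apply (rule sums_mult, rule sums_diff, rule sums_mult, rule assms, rule assms)
  done

lemma lf_supp: "supp a \<Longrightarrow> supp (lf a)"
  unfolding supp_def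
proof (intro allI impI)
  fix \<mu> \<kappa> assume sa: "\<forall>\<mu> \<kappa>. \<mu> \<notin> Lt \<or> \<kappa> \<notin> Lt \<longrightarrow> a \<mu> \<kappa> = 0" and m: "\<mu> \<notin> Lt \<or> \<kappa> \<notin> Lt"
  have 1: "of_bool (\<mu> \<in> Lt) * (\<Sum>\<xi>\<in>NN N \<mu>. a \<xi> \<kappa>) = 0"
    using sa m by (cases "\<mu> \<in> Lt") auto
  have 2: "of_bool (\<kappa> \<in> Lt) * (\<Sum>\<xi>\<in>NN N \<kappa>. a \<mu> \<xi>) = 0"
    using sa m by (cases "\<kappa> \<in> Lt") auto
  have 3: "a \<mu> \<kappa> = 0" using sa m by auto
  have 4: "of_bool (\<mu> = \<kappa> \<and> \<mu> \<in> Lt) * a \<mu> \<mu> = 0" using m by auto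
  show "lf a \<mu> \<kappa> = 0" unfolding lf_alt 1 2 3 4 by simp
qed

lemma lfpow_supp: "supp a \<Longrightarrow> supp ((lf ^^ k) a)"
  by (induction k) (auto simp: lf_supp)

definition Kc :: real where "Kc = 2 * real (card Lt) + 2 * zl + 2 * zr + 2 * b"

lemma Kc_nonneg: "Kc \<ge> 0" using zl zr bpos unfolding Kc_def by simp

lemma card_NN: "card (NN N \<mu>) \<le> card Lt"
  using NN_sub finL by (rule card_mono[rotated])

lemma sum_NN_bound:
  assumes "\<And>\<xi>. cmod (g \<xi>) \<le> M"
  shows "cmod (\<Sum>\<xi>\<in>NN N \<mu>. g \<xi>) \<le> real (card Lt) * M"
proof -
  have M: "M \<ge> 0" using assms[of undefined] by (meson norm_ge_zero order_trans)
  have "cmod (\<Sum>\<xi>\<in>NN N \<mu>. g \<xi>) \<le> (\<Sum>\<xi>\<in>NN N \<mu>. cmod (g \<xi>))" by (rule norm_sum)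
  also have "\<dots> \<le> (\<Sum>\<xi>\<in>NN N \<mu>. M)" by (intro sum_mono assms)
  also have "\<dots> = real (card (NN N \<mu>)) * M" by simp
  also have "\<dots> \<le> real (card Lt) * M" using card_NN M by (intro mult_right_mono) auto
  finally show ?thesis .
qed

lemma lf_bound:
  assumes "\<And>\<mu> \<kappa>. cmod (a \<mu> \<kappa>) \<le> M"
  shows "cmod (lf a \<mu> \<kappa>) \<le> Kc * M"
proof -
  have M: "M \<ge> 0" using assms[of undefined undefined] by (meson norm_ge_zero order_trans)
  have h1: "cmod (of_bool (\<mu> \<in> Lt) * (\<Sum>\<xi>\<in>NN N \<mu>. a \<xi> \<kappa>)) \<le> real (card Lt) * M"
    using sum_NN_bound[of "\<lambda>\<xi>. a \<xi> \<kappa>" M \<mu>] assms M by (auto simp: of_bool_def)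
  have h2: "cmod (of_bool (\<kappa> \<in> Lt) * (\<Sum>\<xi>\<in>NN N \<kappa>. a \<mu> \<xi>)) \<le> real (card Lt) * M"
    using sum_NN_bound[of "\<lambda>\<xi>. a \<mu> \<xi>" M \<kappa>] assms M by (auto simp: of_bool_def)
  have ob: "cmod (of_bool P + of_bool Q :: complex) \<le> 2" for P Q by (auto simp: of_bool_def)
  have ob2: "cmod ((of_bool P + of_bool Q) * x) \<le> 2 * M" if "cmod x \<le> M" for P Q and x :: complex
    using mult_mono[OF ob[of P Q] that] M by (simp add: norm_mult)
  have h3: "cmod (of_real zl * ((of_bool (\<mu> \<in> S1) + of_bool (\<kappa> \<in> S1)) * a \<mu> \<kappa>)) \<le> zl * (2 * M)"
    using zl ob2[OF assms] by (simp add: norm_mult mult_left_mono)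
  have h4: "cmod (of_real zr * ((of_bool (\<mu> \<in> SN) + of_bool (\<kappa> \<in> SN)) * a \<mu> \<kappa>)) \<le> zr * (2 * M)"
    using zr ob2[OF assms] by (simp add: norm_mult mult_left_mono)
  have h5: "cmod (of_bool (\<mu> = \<kappa> \<and> \<mu> \<in> Lt) * a \<mu> \<mu> - a \<mu> \<kappa>) \<le> 2 * M"
  proof -
    have "cmod (of_bool (\<mu> = \<kappa> \<and> \<mu> \<in> Lt) * a \<mu> \<mu> - a \<mu> \<kappa>) \<le> cmod (of_bool (\<mu> = \<kappa> \<and> \<mu> \<in> Lt) * a \<mu> \<mu>) + cmod (a \<mu> \<kappa>)"
      by (rule norm_triangle_ineq4)
    also have "\<dots> \<le> M + M" using assms M by (intro add_mono) (auto simp: of_bool_def)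
    finally show ?thesis by simp
  qed
  have h6: "cmod (of_real b * (of_bool (\<mu> = \<kappa> \<and> \<mu> \<in> Lt) * a \<mu> \<mu> - a \<mu> \<kappa>)) \<le> b * (2 * M)"
    using bpos h5 by (simp add: norm_mult mult_left_mono)
  let ?A = "of_bool (\<mu> \<in> Lt) * (\<Sum>\<xi>\<in>NN N \<mu>. a \<xi> \<kappa>) - of_bool (\<kappa> \<in> Lt) * (\<Sum>\<xi>\<in>NN N \<kappa>. a \<mu> \<xi>)"
  have hA: "cmod (\<i> * ?A) \<le> real (card Lt) * M + real (card Lt) * M"
  proof -
    have "cmod (\<i> * ?A) = cmod ?A" by (simp add: norm_mult)
    also have "\<dots> \<le> cmod (of_bool (\<mu> \<in> Lt) * (\<Sum>\<xi>\<in>NN N \<mu>. a \<xi> \<kappa>)) + cmod (of_bool (\<kappa> \<in> Lt) * (\<Sum>\<xi>\<in>NN N \<kappa>. a \<mu> \<xi>))"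
      by (rule norm_triangle_ineq4)
    also have "\<dots> \<le> real (card Lt) * M + real (card Lt) * M"
      by (rule add_mono[OF h1 h2])
    finally show ?thesis .
  qed
  have e1: "cmod (x - y - z + w) \<le> cmod x + cmod y + cmod z + cmod w" for x y z w :: complex
    using norm_triangle_ineq[of "x-y-z" w] norm_triangle_ineq4[of "x-y" z] norm_triangle_ineq4[of x y] by linarith
  have "cmod (lf a \<mu> \<kappa>) \<le> (real (card Lt) * M + real (card Lt) * M) + zl * (2 * M) + zr * (2 * M) + b * (2 * M)"
    unfolding lf_alt
    by (rule order_trans[OF e1]) (intro add_mono hA h3 h4 h6)
  also have "\<dots> = Kc * M" unfolding Kc_def by (simp add: algebra_simps)
  finally show ?thesis .
qed

lemma lfpow_bound:
  assumes "\<And>\<mu> \<kappa>. cmod (a \<mu> \<kappa>) \<le> M"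
  shows "cmod ((lf ^^ k) a \<mu> \<kappa>) \<le> Kc ^ k * M"
proof (induction k arbitrary: \<mu> \<kappa>)
  case 0 then show ?case using assms by simp
next
  case (Suc k)
  have "cmod (lf ((lf ^^ k) a) \<mu> \<kappa>) \<le> Kc * (Kc ^ k * M)" by (rule lf_bound) (rule Suc.IH)
  then show ?case by (simp add: algebra_simps)
qed

definition cf :: "cmat \<Rightarrow> site \<Rightarrow> site \<Rightarrow> nat \<Rightarrow> complex" where
  "cf a \<mu> \<kappa> k = (lf ^^ k) a \<mu> \<kappa> / of_nat (fact k)"

definition ex :: "real \<Rightarrow> cmat \<Rightarrow> cmat" where
  "ex t a = (\<lambda>\<mu> \<kappa>. \<Sum>k. cf a \<mu> \<kappa> k * (of_real t) ^ k)"

lemma exp_lindblad_eq: "exp_lindblad N (\<lambda>_. 0) zl zr b t a = ex t a"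
  unfolding exp_lindblad_def ex_def cf_def l_eq
  by (intro ext suminf_cong) (simp add: field_simps)

lemma summable_cf:
  assumes "supp a"
  shows "summable (\<lambda>k. cf a \<mu> \<kappa> k * z ^ k)"
proof (rule summable_comparison_test')
  show "summable (\<lambda>k. nrm a * (inverse (fact k) * (Kc * cmod z) ^ k))"
    by (intro summable_mult summable_exp)
  fix k
  have "cmod (cf a \<mu> \<kappa> k * z ^ k) = cmod ((lf ^^ k) a \<mu> \<kappa>) / fact k * cmod z ^ k"
    unfolding cf_def by (simp add: norm_mult norm_divide norm_power)
  also have "\<dots> \<le> Kc ^ k * nrm a / fact k * cmod z ^ k"
    by (intro mult_right_mono divide_right_mono lfpow_bound nrm_bound assms) auto
  also have "\<dots> = nrm a * (inverse (fact k) * (Kc * cmod z) ^ k)"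
    by (simp add: field_simps power_mult_distrib)
  finally show "norm (cf a \<mu> \<kappa> k * z ^ k) \<le> nrm a * (inverse (fact k) * (Kc * cmod z) ^ k)" by simp
qed

lemma cf_lf: "cf (lf a) \<mu> \<kappa> k = diffs (cf a \<mu> \<kappa>) k"
proof -
  have p: "(lf ^^ k) (lf a) = (lf ^^ Suc k) a" by (simp only: funpow_Suc_right o_apply)
  have f: "(of_nat (fact (Suc k)) :: complex) = of_nat (Suc k) * of_nat (fact k)"
    by (simp only: fact_Suc of_nat_mult of_nat_id)
  have nz: "(of_nat (fact k) :: complex) \<noteq> 0" "(of_nat (Suc k) :: complex) \<noteq> 0"
    by (simp, metis of_nat_eq_0_iff nat.simps(3))
  show ?thesis unfolding cf_def diffs_def p f using nz by (simp add: divide_simps del: funpow.simps of_nat_Suc)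
qed

lemma ex_deriv:
  assumes "supp a"
  shows "((\<lambda>t. ex t a \<mu> \<kappa>) has_vector_derivative ex t (lf a) \<mu> \<kappa>) (at t within S)"
proof -
  have "((\<lambda>x. \<Sum>n. cf a \<mu> \<kappa> n * x ^ n) has_field_derivative (\<Sum>n. diffs (cf a \<mu> \<kappa>) n * x ^ n)) (at x)" for x :: complex
    by (rule termdiffs_strong_converges_everywhere) (rule summable_cf[OF assms])
  from has_vector_derivative_real_field[OF this[of "of_real t"]]
  show ?thesis unfolding ex_def cf_lf[symmetric] .
qed

lemma ex_cont: "supp a \<Longrightarrow> continuous_on S (\<lambda>t. ex t a \<mu> \<kappa>)"
  by (metis ex_deriv has_vector_derivative_continuous continuous_at_imp_continuous_on)

lemma ex_zero: "ex 0 a = a"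
  unfolding ex_def of_real_0 powser_zero by (intro ext) (simp add: cf_def)

lemma ex_supp: "supp a \<Longrightarrow> supp (ex t a)"
  using lfpow_supp unfolding supp_def ex_def cf_def by auto

lemma ex_add: "supp a \<Longrightarrow> supp c \<Longrightarrow> ex t (\<lambda>\<mu> \<kappa>. a \<mu> \<kappa> + c \<mu> \<kappa>) = (\<lambda>\<mu> \<kappa>. ex t a \<mu> \<kappa> + ex t c \<mu> \<kappa>)"
proof (intro ext)
  fix \<mu> \<kappa>
  assume sa: "supp a" and sc: "supp c"
  have pw: "(lf ^^ k) (\<lambda>\<mu> \<kappa>. a \<mu> \<kappa> + c \<mu> \<kappa>) = (\<lambda>\<mu> \<kappa>. (lf ^^ k) a \<mu> \<kappa> + (lf ^^ k) c \<mu> \<kappa>)" for k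
    by (induction k) (auto simp: lf_add)
  have "ex t (\<lambda>\<mu> \<kappa>. a \<mu> \<kappa> + c \<mu> \<kappa>) \<mu> \<kappa> = (\<Sum>k. cf a \<mu> \<kappa> k * (of_real t) ^ k + cf c \<mu> \<kappa> k * (of_real t) ^ k)"
    unfolding ex_def cf_def pw by (simp add: add_divide_distrib distrib_right)
  also have "\<dots> = ex t a \<mu> \<kappa> + ex t c \<mu> \<kappa>" unfolding ex_def
    by (intro suminf_add[symmetric] summable_cf sa sc)
  finally show "ex t (\<lambda>\<mu> \<kappa>. a \<mu> \<kappa> + c \<mu> \<kappa>) \<mu> \<kappa> = ex t a \<mu> \<kappa> + ex t c \<mu> \<kappa>" .
qed

lemma ex_scale: "supp a \<Longrightarrow> ex t (\<lambda>\<mu> \<kappa>. z * a \<mu> \<kappa>) = (\<lambda>\<mu> \<kappa>. z * ex t a \<mu> \<kappa>)"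
proof (intro ext)
  fix \<mu> \<kappa>
  assume sa: "supp a"
  have pw: "(lf ^^ k) (\<lambda>\<mu> \<kappa>. z * a \<mu> \<kappa>) = (\<lambda>\<mu> \<kappa>. z * (lf ^^ k) a \<mu> \<kappa>)" for k
    by (induction k) (auto simp: lf_scale)
  have "ex t (\<lambda>\<mu> \<kappa>. z * a \<mu> \<kappa>) \<mu> \<kappa> = (\<Sum>k. z * (cf a \<mu> \<kappa> k * (of_real t) ^ k))"
    unfolding ex_def cf_def pw by (simp add: algebra_simps)
  also have "\<dots> = z * ex t a \<mu> \<kappa>" unfolding ex_def
    by (intro suminf_mult summable_cf sa)
  finally show "ex t (\<lambda>\<mu> \<kappa>. z * a \<mu> \<kappa>) \<mu> \<kappa> = z * ex t a \<mu> \<kappa>" .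
qed

lemma supp_add: "supp a \<Longrightarrow> supp c \<Longrightarrow> supp (\<lambda>\<mu> \<kappa>. a \<mu> \<kappa> + c \<mu> \<kappa>)" by (simp add: supp_def)
lemma supp_diff: "supp a \<Longrightarrow> supp c \<Longrightarrow> supp (\<lambda>\<mu> \<kappa>. a \<mu> \<kappa> - c \<mu> \<kappa>)" by (simp add: supp_def)
lemma supp_scale: "supp a \<Longrightarrow> supp (\<lambda>\<mu> \<kappa>. z * a \<mu> \<kappa>)" by (simp add: supp_def)
lemma supp_zero: "supp (\<lambda>_ _. 0)" by (simp add: supp_def)

lemma ex_diff: "supp a \<Longrightarrow> supp c \<Longrightarrow> ex t (\<lambda>\<mu> \<kappa>. a \<mu> \<kappa> - c \<mu> \<kappa>) = (\<lambda>\<mu> \<kappa>. ex t a \<mu> \<kappa> - ex t c \<mu> \<kappa>)"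
proof -
  assume sa: "supp a" and sc: "supp c"
  have "ex t (\<lambda>\<mu> \<kappa>. a \<mu> \<kappa> - c \<mu> \<kappa>) = ex t (\<lambda>\<mu> \<kappa>. a \<mu> \<kappa> + (-1) * c \<mu> \<kappa>)" by simp
  also have "\<dots> = (\<lambda>\<mu> \<kappa>. ex t a \<mu> \<kappa> + ex t (\<lambda>\<mu> \<kappa>. (-1) * c \<mu> \<kappa>) \<mu> \<kappa>)"
    by (rule ex_add[OF sa supp_scale[OF sc]])
  also have "\<dots> = (\<lambda>\<mu> \<kappa>. ex t a \<mu> \<kappa> + (-1) * ex t c \<mu> \<kappa>)" by (simp only: ex_scale[OF sc])
  also have "\<dots> = (\<lambda>\<mu> \<kappa>. ex t a \<mu> \<kappa> - ex t c \<mu> \<kappa>)" by simp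
  finally show ?thesis .
qed

lemma ex_zero_mat: "ex t (\<lambda>_ _. 0) = (\<lambda>_ _. 0)"
  using ex_scale[OF supp_zero, of t 0] by simp

lemma ex_sum: "finite I \<Longrightarrow> (\<And>i. i \<in> I \<Longrightarrow> supp (f i)) \<Longrightarrow>
   ex t (\<lambda>\<mu> \<kappa>. \<Sum>i\<in>I. f i \<mu> \<kappa>) = (\<lambda>\<mu> \<kappa>. \<Sum>i\<in>I. ex t (f i) \<mu> \<kappa>)"
proof (induction I rule: finite_induct)
  case empty then show ?case by (simp add: ex_zero_mat)
next
  case (insert x F)
  have s: "supp (\<lambda>\<mu> \<kappa>. \<Sum>i\<in>F. f i \<mu> \<kappa>)" using insert.prems unfolding supp_def by auto
  show ?case using insert by (simp add: ex_add[OF _ s])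
qed

lemma lf_ex: "supp a \<Longrightarrow> lf (ex t a) = ex t (lf a)"
proof (intro ext)
  fix \<mu> \<kappa>
  assume sa: "supp a"
  have "(\<lambda>k. lf (\<lambda>\<mu> \<kappa>. cf a \<mu> \<kappa> k * (of_real t) ^ k) \<mu> \<kappa>) sums lf (ex t a) \<mu> \<kappa>"
    unfolding ex_def by (intro lf_sums summable_sums summable_cf sa)
  moreover have "lf (\<lambda>\<mu> \<kappa>. cf a \<mu> \<kappa> k * (of_real t) ^ k) \<mu> \<kappa> = cf (lf a) \<mu> \<kappa> k * (of_real t) ^ k" for k
  proof -
    have "lf (\<lambda>\<mu> \<kappa>. cf a \<mu> \<kappa> k * (of_real t) ^ k) = lf (\<lambda>\<mu> \<kappa>. ((of_real t) ^ k / of_nat (fact k)) * (lf ^^ k) a \<mu> \<kappa>)"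
      unfolding cf_def by (simp add: field_simps)
    also have "\<dots> = (\<lambda>\<mu> \<kappa>. ((of_real t) ^ k / of_nat (fact k)) * lf ((lf ^^ k) a) \<mu> \<kappa>)"
      by (rule lf_scale)
    finally show ?thesis unfolding cf_def by (simp add: funpow_swap1 field_simps)
  qed
  ultimately have "(\<lambda>k. cf (lf a) \<mu> \<kappa> k * (of_real t) ^ k) sums lf (ex t a) \<mu> \<kappa>" by simp
  then show "lf (ex t a) \<mu> \<kappa> = ex t (lf a) \<mu> \<kappa>" unfolding ex_def by (simp add: sums_iff)
qed

end



context lind begin

definition En :: "cmat \<Rightarrow> real" where
  "En a = (\<Sum>\<mu>\<in>Lt. \<Sum>\<kappa>\<in>Lt. (cmod (a \<mu> \<kappa>))\<^sup>2)"

definition Dis :: "cmat \<Rightarrow> real" where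
  "Dis a = Re (\<Sum>\<mu>\<in>Lt. \<Sum>\<kappa>\<in>Lt. cnj (a \<mu> \<kappa>) * lf a \<mu> \<kappa>)"

definition wt :: "site \<Rightarrow> site \<Rightarrow> real" where
  "wt \<mu> \<kappa> = zl * (of_bool (\<mu> \<in> S1) + of_bool (\<kappa> \<in> S1)) + zr * (of_bool (\<mu> \<in> SN) + of_bool (\<kappa> \<in> SN))
     + b * of_bool (\<mu> \<noteq> \<kappa>)"

lemma wt_nonneg: "wt \<mu> \<kappa> \<ge> 0" using zl zr bpos unfolding wt_def by simp

lemma En_nonneg: "En a \<ge> 0" unfolding En_def by (intro sum_nonneg) auto

lemma NN_swap: "(\<Sum>\<mu>\<in>Lt. \<Sum>\<xi>\<in>NN N \<mu>. g \<mu> \<xi>) = (\<Sum>\<xi>\<in>Lt. \<Sum>\<mu>\<in>NN N \<xi>. g \<mu> \<xi>)"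
proof -
  have e: "(\<Sum>\<xi>\<in>NN N \<mu>. g \<mu> \<xi>) = (\<Sum>\<xi>\<in>Lt. if \<xi> \<in> NN N \<mu> then g \<mu> \<xi> else 0)" for \<mu>
  proof -
    have "(\<Sum>\<xi>\<in>Lt. if \<xi> \<in> NN N \<mu> then g \<mu> \<xi> else 0) = (\<Sum>\<xi>\<in>Lt \<inter> NN N \<mu>. g \<mu> \<xi>)"
      using finL by (simp add: sum.inter_restrict)
    also have "Lt \<inter> NN N \<mu> = NN N \<mu>" using NN_sub by auto
    finally show ?thesis by simp
  qed
  have e2: "(\<Sum>\<mu>\<in>NN N \<xi>. g \<mu> \<xi>) = (\<Sum>\<mu>\<in>Lt. if \<mu> \<in> NN N \<xi> then g \<mu> \<xi> else 0)" for \<xi>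
  proof -
    have "(\<Sum>\<mu>\<in>Lt. if \<mu> \<in> NN N \<xi> then g \<mu> \<xi> else 0) = (\<Sum>\<mu>\<in>Lt \<inter> NN N \<xi>. g \<mu> \<xi>)"
      using finL by (simp add: sum.inter_restrict)
    also have "Lt \<inter> NN N \<xi> = NN N \<xi>" using NN_sub by auto
    finally show ?thesis by simp
  qed
  have "(\<Sum>\<mu>\<in>Lt. \<Sum>\<xi>\<in>NN N \<mu>. g \<mu> \<xi>) = (\<Sum>\<mu>\<in>Lt. \<Sum>\<xi>\<in>Lt. if \<xi> \<in> NN N \<mu> then g \<mu> \<xi> else 0)"
    by (simp add: e)
  also have "\<dots> = (\<Sum>\<xi>\<in>Lt. \<Sum>\<mu>\<in>Lt. if \<xi> \<in> NN N \<mu> then g \<mu> \<xi> else 0)" by (rule sum.swap)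
  also have "\<dots> = (\<Sum>\<xi>\<in>Lt. \<Sum>\<mu>\<in>Lt. if \<mu> \<in> NN N \<xi> then g \<mu> \<xi> else 0)"
    by (intro sum.cong refl) (metis NN_sym_iff)
  also have "\<dots> = (\<Sum>\<xi>\<in>Lt. \<Sum>\<mu>\<in>NN N \<xi>. g \<mu> \<xi>)" by (simp add: e2)
  finally show ?thesis .
qed

lemma herm_real: "Im (\<Sum>\<mu>\<in>Lt. \<Sum>\<xi>\<in>NN N \<mu>. cnj (f \<mu>) * f \<xi>) = 0"
proof -
  let ?X = "\<Sum>\<mu>\<in>Lt. \<Sum>\<xi>\<in>NN N \<mu>. cnj (f \<mu>) * f \<xi>"
  have "cnj ?X = (\<Sum>\<mu>\<in>Lt. \<Sum>\<xi>\<in>NN N \<mu>. cnj (f \<xi>) * f \<mu>)"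
    by (simp add: mult.commute)
  also have "\<dots> = (\<Sum>\<xi>\<in>Lt. \<Sum>\<mu>\<in>NN N \<xi>. cnj (f \<xi>) * f \<mu>)" by (rule NN_swap)
  finally have "cnj ?X = ?X" .
  then show ?thesis by (metis Reals_cnj_iff complex_is_Real_iff)
qed

lemma ham_real: "Im (\<Sum>\<mu>\<in>Lt. \<Sum>\<kappa>\<in>Lt. cnj (a \<mu> \<kappa>) *
   ((\<Sum>\<xi>\<in>NN N \<mu>. a \<xi> \<kappa>) - (\<Sum>\<xi>\<in>NN N \<kappa>. a \<mu> \<xi>))) = 0"
proof -
  have X: "(\<Sum>\<mu>\<in>Lt. \<Sum>\<kappa>\<in>Lt. cnj (a \<mu> \<kappa>) * (\<Sum>\<xi>\<in>NN N \<mu>. a \<xi> \<kappa>)) =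
     (\<Sum>\<kappa>\<in>Lt. \<Sum>\<mu>\<in>Lt. \<Sum>\<xi>\<in>NN N \<mu>. cnj (a \<mu> \<kappa>) * a \<xi> \<kappa>)"
    by (subst sum.swap) (simp add: sum_distrib_left)
  have Y: "(\<Sum>\<mu>\<in>Lt. \<Sum>\<kappa>\<in>Lt. cnj (a \<mu> \<kappa>) * (\<Sum>\<xi>\<in>NN N \<kappa>. a \<mu> \<xi>)) =
     (\<Sum>\<mu>\<in>Lt. \<Sum>\<kappa>\<in>Lt. \<Sum>\<xi>\<in>NN N \<kappa>. cnj (a \<mu> \<kappa>) * a \<mu> \<xi>)"
    by (simp add: sum_distrib_left)
  have "Im (\<Sum>\<mu>\<in>Lt. \<Sum>\<kappa>\<in>Lt. cnj (a \<mu> \<kappa>) * ((\<Sum>\<xi>\<in>NN N \<mu>. a \<xi> \<kappa>) - (\<Sum>\<xi>\<in>NN N \<kappa>. a \<mu> \<xi>)))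
     = Im (\<Sum>\<mu>\<in>Lt. \<Sum>\<kappa>\<in>Lt. cnj (a \<mu> \<kappa>) * (\<Sum>\<xi>\<in>NN N \<mu>. a \<xi> \<kappa>))
       - Im (\<Sum>\<mu>\<in>Lt. \<Sum>\<kappa>\<in>Lt. cnj (a \<mu> \<kappa>) * (\<Sum>\<xi>\<in>NN N \<kappa>. a \<mu> \<xi>))"
    by (simp add: right_diff_distrib sum_subtractf)
  also have "\<dots> = 0"
  proof -
    have h1: "Im (\<Sum>\<mu>\<in>Lt. \<Sum>\<xi>\<in>NN N \<mu>. cnj (a \<mu> \<kappa>) * a \<xi> \<kappa>) = 0" for \<kappa>
      by (rule herm_real)
    have h2: "Im (\<Sum>\<kappa>\<in>Lt. \<Sum>\<xi>\<in>NN N \<kappa>. cnj (a \<mu> \<kappa>) * a \<mu> \<xi>) = 0" for \<mu>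
      by (rule herm_real)
    have "Im (\<Sum>\<kappa>\<in>Lt. \<Sum>\<mu>\<in>Lt. \<Sum>\<xi>\<in>NN N \<mu>. cnj (a \<mu> \<kappa>) * a \<xi> \<kappa>) = 0"
      unfolding Im_sum[of _ Lt] by (rule sum.neutral) (insert h1, simp only: Im_sum, simp)
    moreover have "Im (\<Sum>\<mu>\<in>Lt. \<Sum>\<kappa>\<in>Lt. \<Sum>\<xi>\<in>NN N \<kappa>. cnj (a \<mu> \<kappa>) * a \<mu> \<xi>) = 0"
      unfolding Im_sum[of _ Lt] by (rule sum.neutral) (insert h2, simp only: Im_sum, simp)
    ultimately show ?thesis unfolding X Y by simp
  qed
  finally show ?thesis .
qed

lemma Dis_eq: "Dis a = - (\<Sum>\<mu>\<in>Lt. \<Sum>\<kappa>\<in>Lt. wt \<mu> \<kappa> * (cmod (a \<mu> \<kappa>))\<^sup>2)"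
proof -
  let ?H = "\<lambda>\<mu> \<kappa>. (\<Sum>\<xi>\<in>NN N \<mu>. a \<xi> \<kappa>) - (\<Sum>\<xi>\<in>NN N \<kappa>. a \<mu> \<xi>)"
  have tm: "Re (cnj (a \<mu> \<kappa>) * lf a \<mu> \<kappa>) = - Im (cnj (a \<mu> \<kappa>) * ?H \<mu> \<kappa>) - wt \<mu> \<kappa> * (cmod (a \<mu> \<kappa>))\<^sup>2"
    if "\<mu> \<in> Lt" "\<kappa> \<in> Lt" for \<mu> \<kappa>
  proof -
    have sq: "cnj (a \<mu> \<kappa>) * a \<mu> \<kappa> = of_real ((cmod (a \<mu> \<kappa>))\<^sup>2)"
      by (metis complex_norm_square mult.commute)
    have d: "cnj (a \<mu> \<kappa>) * (of_bool (\<mu> = \<kappa> \<and> \<mu> \<in> Lt) * a \<mu> \<mu> - a \<mu> \<kappa>) = - of_real (of_bool (\<mu> \<noteq> \<kappa>) * (cmod (a \<mu> \<kappa>))\<^sup>2)"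
      using that sq by (cases "\<mu> = \<kappa>") (auto simp: algebra_simps)
    have "cnj (a \<mu> \<kappa>) * lf a \<mu> \<kappa> = \<i> * (cnj (a \<mu> \<kappa>) * ?H \<mu> \<kappa>)
       - of_real zl * ((of_bool (\<mu> \<in> S1) + of_bool (\<kappa> \<in> S1)) * (cnj (a \<mu> \<kappa>) * a \<mu> \<kappa>))
       - of_real zr * ((of_bool (\<mu> \<in> SN) + of_bool (\<kappa> \<in> SN)) * (cnj (a \<mu> \<kappa>) * a \<mu> \<kappa>))
       + of_real b * (cnj (a \<mu> \<kappa>) * (of_bool (\<mu> = \<kappa> \<and> \<mu> \<in> Lt) * a \<mu> \<mu> - a \<mu> \<kappa>))"
      unfolding lf_alt using that by (simp add: algebra_simps)
    also have "\<dots> = \<i> * (cnj (a \<mu> \<kappa>) * ?H \<mu> \<kappa>) - of_real (wt \<mu> \<kappa> * (cmod (a \<mu> \<kappa>))\<^sup>2)"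
      unfolding d sq wt_def by (simp add: algebra_simps)
    finally show ?thesis by simp
  qed
  have "Dis a = (\<Sum>\<mu>\<in>Lt. \<Sum>\<kappa>\<in>Lt. - Im (cnj (a \<mu> \<kappa>) * ?H \<mu> \<kappa>) - wt \<mu> \<kappa> * (cmod (a \<mu> \<kappa>))\<^sup>2)"
    unfolding Dis_def Re_sum by (intro sum.cong refl tm) auto
  also have "\<dots> = - Im (\<Sum>\<mu>\<in>Lt. \<Sum>\<kappa>\<in>Lt. cnj (a \<mu> \<kappa>) * ?H \<mu> \<kappa>) - (\<Sum>\<mu>\<in>Lt. \<Sum>\<kappa>\<in>Lt. wt \<mu> \<kappa> * (cmod (a \<mu> \<kappa>))\<^sup>2)"
    by (simp add: sum_subtractf Im_sum sum_negf)
  also have "\<dots> = - (\<Sum>\<mu>\<in>Lt. \<Sum>\<kappa>\<in>Lt. wt \<mu> \<kappa> * (cmod (a \<mu> \<kappa>))\<^sup>2)" using ham_real[of a] by simp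
  finally show ?thesis .
qed

lemma Dis_le: "Dis a \<le> 0"
  unfolding Dis_eq using wt_nonneg by (auto intro!: sum_nonneg)

lemma Dis_zero_S1:
  assumes "Dis a = 0" "\<mu> \<in> S1" "\<kappa> \<in> Lt"
  shows "a \<mu> \<kappa> = 0"
proof -
  have m: "\<mu> \<in> Lt" using assms slab_sub by auto
  have s: "(\<Sum>\<mu>\<in>Lt. \<Sum>\<kappa>\<in>Lt. wt \<mu> \<kappa> * (cmod (a \<mu> \<kappa>))\<^sup>2) = 0" using assms Dis_eq by simp
  have nn: "\<And>\<mu> \<kappa>. 0 \<le> wt \<mu> \<kappa> * (cmod (a \<mu> \<kappa>))\<^sup>2" using wt_nonneg by simp
  have "(\<Sum>\<kappa>\<in>Lt. wt \<mu> \<kappa> * (cmod (a \<mu> \<kappa>))\<^sup>2) = 0"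
    using s m finL nn by (subst (asm) sum_nonneg_eq_0_iff) (auto intro: sum_nonneg)
  then have "wt \<mu> \<kappa> * (cmod (a \<mu> \<kappa>))\<^sup>2 = 0"
    using assms(3) finL nn by (subst (asm) sum_nonneg_eq_0_iff) auto
  moreover have "wt \<mu> \<kappa> \<ge> zl" using assms(2) zl zr bpos unfolding wt_def by simp
  ultimately show ?thesis using zl by simp
qed

lemma cmod_sq_deriv:
  assumes "(f has_vector_derivative f') (at t)"
  shows "((\<lambda>t. (cmod (f t))\<^sup>2) has_real_derivative 2 * Re (cnj (f t) * f')) (at t)"
proof -
  have r1: "((\<lambda>t. (Re (f t))\<^sup>2) has_real_derivative (2 * Re (f t) * Re f')) (at t)"
    by (rule DERIV_cong[OF DERIV_power[OF has_field_derivative_Re[OF assms], of 2]]) simp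
  have r2: "((\<lambda>t. (Im (f t))\<^sup>2) has_real_derivative (2 * Im (f t) * Im f')) (at t)"
    by (rule DERIV_cong[OF DERIV_power[OF has_field_derivative_Im[OF assms], of 2]]) simp
  have "((\<lambda>t. (Re (f t))\<^sup>2 + (Im (f t))\<^sup>2) has_real_derivative
     (2 * Re (f t) * Re f' + 2 * Im (f t) * Im f')) (at t)"
    by (rule DERIV_add[OF r1 r2])
  then show ?thesis by (simp add: cmod_power2 algebra_simps)
qed

lemma En_deriv:
  assumes "\<And>\<mu> \<kappa>. ((\<lambda>t. z t \<mu> \<kappa>) has_vector_derivative z' \<mu> \<kappa>) (at t)"
  shows "((\<lambda>t. En (z t)) has_real_derivative 2 * Re (\<Sum>\<mu>\<in>Lt. \<Sum>\<kappa>\<in>Lt. cnj (z t \<mu> \<kappa>) * z' \<mu> \<kappa>)) (at t)"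
  unfolding En_def Re_sum sum_distrib_left
  by (intro DERIV_sum cmod_sq_deriv assms)

lemma En_deriv_lf:
  assumes "\<And>\<mu> \<kappa>. ((\<lambda>t. z t \<mu> \<kappa>) has_vector_derivative lf (z t) \<mu> \<kappa>) (at t)"
  shows "((\<lambda>t. En (z t)) has_real_derivative 2 * Dis (z t)) (at t)"
  using En_deriv[OF assms] unfolding Dis_def .

lemma En_zero: "supp a \<Longrightarrow> En a = 0 \<Longrightarrow> a = (\<lambda>_ _. 0)"
proof (intro ext)
  fix \<mu> \<kappa> assume s: "supp a" and e: "En a = 0"
  show "a \<mu> \<kappa> = 0"
  proof (cases "\<mu> \<in> Lt \<and> \<kappa> \<in> Lt")
    case True
    have "(\<Sum>\<kappa>\<in>Lt. (cmod (a \<mu> \<kappa>))\<^sup>2) = 0"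
      using e True finL unfolding En_def by (subst (asm) sum_nonneg_eq_0_iff) (auto intro: sum_nonneg)
    then have "(cmod (a \<mu> \<kappa>))\<^sup>2 = 0" using True finL by (subst (asm) sum_nonneg_eq_0_iff) auto
    then show ?thesis by simp
  next
    case False then show ?thesis using s unfolding supp_def by auto
  qed
qed

lemma uniq:
  assumes d: "\<And>t \<mu> \<kappa>. ((\<lambda>t. z t \<mu> \<kappa>) has_vector_derivative lf (z t) \<mu> \<kappa>) (at t)"
    and s: "\<And>t. supp (z t)" and z0: "z 0 = (\<lambda>_ _. 0)" and t: "t \<ge> 0"
  shows "z t = (\<lambda>_ _. 0)"
proof -
  have "En (z t) \<le> En (z 0)"
    using t by (intro DERIV_nonpos_imp_nonincreasing[of 0 t "\<lambda>t. En (z t)"])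
      (auto intro!: exI[of _ "2 * Dis (z _)"] En_deriv_lf d Dis_le simp: mult_le_0_iff)
  also have "En (z 0) = 0" unfolding z0 En_def by simp
  finally have "En (z t) = 0" using En_nonneg[of "z t"] by linarith
  then show ?thesis using En_zero s by blast
qed

lemma ex_deriv_at: "supp a \<Longrightarrow> ((\<lambda>t. ex t a \<mu> \<kappa>) has_vector_derivative lf (ex t a) \<mu> \<kappa>) (at t)"
  using ex_deriv[of a \<mu> \<kappa> t UNIV] by (simp add: lf_ex)

lemma ex_semigroup:
  assumes sa: "supp a" and s: "s \<ge> 0"
  shows "ex (s + t) a = ex s (ex t a)"
proof -
  define z where "z = (\<lambda>s. \<lambda>\<mu> \<kappa>. ex (s + t) a \<mu> \<kappa> - ex s (ex t a) \<mu> \<kappa>)"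
  have st: "supp (ex t a)" by (rule ex_supp[OF sa])
  have d1: "((\<lambda>s. ex (s + t) a \<mu> \<kappa>) has_vector_derivative lf (ex (s + t) a) \<mu> \<kappa>) (at s)" for s \<mu> \<kappa>
  proof -
    have "((\<lambda>s. s + t) has_vector_derivative 1) (at s)"
      by (auto intro!: derivative_eq_intros simp: has_real_derivative_iff_has_vector_derivative[symmetric])
    from vector_diff_chain_at[OF this ex_deriv_at[OF sa, of \<mu> \<kappa> "s + t"]]
    show ?thesis by (simp add: o_def)
  qed
  have d: "((\<lambda>s. z s \<mu> \<kappa>) has_vector_derivative lf (z s) \<mu> \<kappa>) (at s)" for s \<mu> \<kappa>
  proof -
    have "((\<lambda>s. z s \<mu> \<kappa>) has_vector_derivative (lf (ex (s + t) a) \<mu> \<kappa> - lf (ex s (ex t a)) \<mu> \<kappa>)) (at s)"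
      unfolding z_def by (intro has_vector_derivative_diff d1 ex_deriv_at st)
    then show ?thesis unfolding z_def lf_diff by simp
  qed
  have sz: "supp (z s)" for s unfolding z_def by (intro supp_diff ex_supp sa st)
  have z0: "z 0 = (\<lambda>_ _. 0)" unfolding z_def by (simp add: ex_zero)
  have "z s = (\<lambda>_ _. 0)" by (rule uniq[OF d sz z0 s])
  then show ?thesis unfolding z_def by (intro ext) (metis right_minus_eq)
qed

lemma En_mono: "supp a \<Longrightarrow> 0 \<le> t \<Longrightarrow> En (ex t a) \<le> En a"
proof -
  assume sa: "supp a" and t: "0 \<le> t"
  have "En (ex t a) \<le> En (ex 0 a)"
    using t by (intro DERIV_nonpos_imp_nonincreasing[of 0 t "\<lambda>t. En (ex t a)"])
      (auto intro!: exI[of _ "2 * Dis (ex _ a)"] En_deriv_lf ex_deriv_at sa Dis_le simp: mult_le_0_iff)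
  then show ?thesis by (simp add: ex_zero)
qed

end



lemma compact_PiE_UNIV:
  assumes "\<And>i. compact (T i)"
  shows "compact (PiE UNIV T :: ('a \<Rightarrow> 'b::topological_space) set)"
proof -
  have "compactin (product_topology (\<lambda>i. euclidean) UNIV) (PiE UNIV T)"
    using assms by (simp add: compactin_PiE)
  then show ?thesis by (simp add: euclidean_product_topology)
qed

lemma cont_coord2: "continuous_on S (\<lambda>x::'a \<Rightarrow> 'b \<Rightarrow> 'c::topological_space. x \<mu> \<kappa>)"
  by (rule continuous_on_subset[OF continuous_on_product_then_coordinatewise[OF continuous_on_product_coordinates]]) auto

context lind begin

lemma En_scale: "En (\<lambda>\<mu> \<kappa>. z * a \<mu> \<kappa>) = (cmod z)\<^sup>2 * En a"
  unfolding En_def by (simp add: sum_distrib_left norm_mult power_mult_distrib)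

lemma En_mono2: "supp a \<Longrightarrow> 0 \<le> s \<Longrightarrow> s \<le> t \<Longrightarrow> En (ex t a) \<le> En (ex s a)"
proof -
  assume sa: "supp a" and s: "0 \<le> s" "s \<le> t"
  have "ex t a = ex (t - s) (ex s a)" using ex_semigroup[OF sa, of "t - s" s] s by simp
  then show ?thesis using En_mono[OF ex_supp[OF sa], of "t - s" s] s by simp
qed

lemma row_lf:
  assumes "\<mu> \<in> Lt" "\<And>\<xi>. y \<mu> \<xi> = 0"
  shows "lf y \<mu> \<kappa> = \<i> * (\<Sum>\<xi>\<in>NN N \<mu>. y \<xi> \<kappa>)"
  using assms unfolding lf_alt by simp

lemma zero_deriv_open:
  assumes "(g has_vector_derivative D) (at s)" "s \<in> {0<..<1::real}" "\<And>\<sigma>. \<sigma> \<in> {0<..<1} \<Longrightarrow> g \<sigma> = 0"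
  shows "D = (0::complex)"
proof -
  have "((\<lambda>_. 0::complex) has_vector_derivative D) (at s)"
    by (rule has_vector_derivative_transform_within_open[OF assms(1) _ assms(2)]) (auto simp: assms(3))
  moreover have "((\<lambda>_. 0::complex) has_vector_derivative 0) (at s)" by (rule has_vector_derivative_const)
  ultimately show ?thesis by (rule vector_derivative_unique_at)
qed

lemma strict_contr:
  assumes sx: "supp x" and pos: "En x > 0"
  shows "En (ex 1 x) < En x"
proof (rule ccontr)
  assume "\<not> En (ex 1 x) < En x"
  then have ge: "En (ex 1 x) \<ge> En x" by simp
  have const: "En (ex s x) = En x" if "0 \<le> s" "s \<le> 1" for s
    using En_mono2[OF sx that] En_mono2[OF sx, of 0 s] that ge by (simp add: ex_zero)
  have dis0: "Dis (ex s x) = 0" if s: "s \<in> {0<..<1}" for s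
  proof -
    have d: "((\<lambda>t. En (ex t x)) has_real_derivative 2 * Dis (ex s x)) (at s)"
      by (intro En_deriv_lf ex_deriv_at sx)
    have "2 * Dis (ex s x) = 0"
    proof (rule DERIV_local_const[OF d, of "min s (1 - s)"])
      show "0 < min s (1 - s)" using s by auto
      show "\<forall>y. \<bar>s - y\<bar> < min s (1 - s) \<longrightarrow> En (ex s x) = En (ex y x)"
        using s by (auto simp: const)
    qed
    then show ?thesis by simp
  qed
  define y where "y = (\<lambda>s. ex s x)"
  have sy: "supp (y s)" for s unfolding y_def by (rule ex_supp[OF sx])
  have rows: "\<forall>s\<in>{0<..<1}. \<forall>\<mu>\<in>Lt. \<mu>!0 \<le> Suc k \<longrightarrow> (\<forall>\<kappa>. y s \<mu> \<kappa> = 0)" for k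
  proof (induction k)
    case 0
    show ?case
    proof (intro ballI impI allI)
      fix s \<mu> \<kappa> assume s: "s \<in> {0<..<1::real}" and m: "\<mu> \<in> Lt" and m0: "\<mu>!0 \<le> Suc 0"
      have "\<mu> \<in> S1" using m m0 first_bounds'[OF m] by (auto simp: slab_def)
      show "y s \<mu> \<kappa> = 0"
      proof (cases "\<kappa> \<in> Lt")
        case True then show ?thesis unfolding y_def using Dis_zero_S1[OF dis0[OF s] \<open>\<mu> \<in> S1\<close>] by blast
      next
        case False then show ?thesis using sy unfolding supp_def by blast
      qed
    qed
  next
    case (Suc k)
    show ?case
    proof (intro ballI impI allI)
      fix s \<mu>' \<kappa> assume s: "s \<in> {0<..<1::real}" and m: "\<mu>' \<in> Lt" and m0: "\<mu>'!0 \<le> Suc (Suc k)"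
      show "y s \<mu>' \<kappa> = 0"
      proof (cases "\<mu>'!0 \<le> Suc k")
        case True then show ?thesis using Suc.IH s m by blast
      next
        case False
        then have e: "\<mu>'!0 = Suc (Suc k)" using m0 by simp
        define \<mu> where "\<mu> = unshift \<mu>'"
        have mu: "\<mu> \<in> Lt" unfolding \<mu>_def using unshift_in_lattice'[OF m] e by simp
        have mu0: "\<mu>!0 = Suc k" unfolding \<mu>_def using unshift_nth'[OF m, of 0] e by simp
        have sh: "shift \<mu> = \<mu>'" unfolding \<mu>_def by (rule shift_unshift'[OF m])
        have row: "\<forall>\<sigma>\<in>{0<..<1}. \<forall>\<xi>. y \<sigma> \<mu> \<xi> = 0" using Suc.IH mu mu0 by simp
        have lf0: "lf (y s) \<mu> \<kappa> = 0"
        proof (rule zero_deriv_open[OF _ s])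
          show "((\<lambda>\<sigma>. y \<sigma> \<mu> \<kappa>) has_vector_derivative lf (y s) \<mu> \<kappa>) (at s)"
            unfolding y_def by (rule ex_deriv_at[OF sx])
          show "\<And>\<sigma>. \<sigma> \<in> {0<..<1} \<Longrightarrow> y \<sigma> \<mu> \<kappa> = 0" using row by blast
        qed
        have "lf (y s) \<mu> \<kappa> = \<i> * (\<Sum>\<xi>\<in>NN N \<mu>. y s \<xi> \<kappa>)"
          using row s mu by (intro row_lf) auto
        also have "(\<Sum>\<xi>\<in>NN N \<mu>. y s \<xi> \<kappa>) = (\<Sum>\<xi>\<in>NN N \<mu>. if \<xi> = \<mu>' then y s \<mu>' \<kappa> else 0)"
        proof (intro sum.cong refl)
          fix \<xi> assume xi: "\<xi> \<in> NN N \<mu>"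
          have xiL: "\<xi> \<in> Lt" using xi NN_sub by blast
          show "y s \<xi> \<kappa> = (if \<xi> = \<mu>' then y s \<mu>' \<kappa> else 0)"
          proof (cases "\<xi>!0 \<le> Suc k")
            case True
            then have "y s \<xi> \<kappa> = 0" using Suc.IH s xiL by blast
            then show ?thesis by auto
          next
            case False
            then have "\<xi>!0 = \<mu>!0 + 1" using NN_first'[OF mu xi] mu0 by auto
            then have "\<xi> = \<mu>'" using NN_up'[OF mu xi] sh by simp
            then show ?thesis by simp
          qed
        qed
        also have "\<dots> = y s \<mu>' \<kappa>"
          using finite_NN shift_NN'[OF mu] sh m by (simp add: sum.delta')
        finally show ?thesis using lf0 by simp
      qed
    qed
  qed
  have allz: "y s \<mu> \<kappa> = 0" if "s \<in> {0<..<1}" for s \<mu> \<kappa>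
  proof (cases "\<mu> \<in> Lt")
    case True
    have "\<mu>!0 \<le> Suc (N!0)" using first_bounds'[OF True] by simp
    then show ?thesis using rows[of "N!0"] that True by blast
  next
    case False then show ?thesis using sy unfolding supp_def by blast
  qed
  have x0: "x \<mu> \<kappa> = 0" for \<mu> \<kappa>
  proof -
    have c: "((\<lambda>s. y s \<mu> \<kappa>) \<longlongrightarrow> y 0 \<mu> \<kappa>) (at_right 0)"
    proof -
      have ic: "isCont (\<lambda>s. y s \<mu> \<kappa>) 0" unfolding y_def using ex_cont[OF sx, of UNIV \<mu> \<kappa>]
        by (simp add: continuous_on_eq_continuous_at)
      show ?thesis using tendsto_mono[OF at_le[of "{0<..}" UNIV] ic[unfolded isCont_def]] by simp
    qed
    have z: "((\<lambda>s. y s \<mu> \<kappa>) \<longlongrightarrow> 0) (at_right 0)"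
    proof (rule tendsto_eventually)
      show "\<forall>\<^sub>F s in at_right 0. y s \<mu> \<kappa> = 0"
        unfolding eventually_at_right[OF zero_less_one] using allz by (auto intro!: exI[of _ 1])
    qed
    have "y 0 \<mu> \<kappa> = 0" using tendsto_unique[OF _ c z] by simp
    then show ?thesis unfolding y_def ex_zero .
  qed
  then have "En x = 0" unfolding En_def by simp
  then show False using pos by simp
qed

end



context lind begin

definition Eb :: "site \<times> site \<Rightarrow> cmat" where
  "Eb p = (\<lambda>\<mu> \<kappa>. if \<mu> = fst p \<and> \<kappa> = snd p then 1 else 0)"

lemma supp_Eb: "p \<in> Lt \<times> Lt \<Longrightarrow> supp (Eb p)"
  unfolding supp_def Eb_def by auto

lemma supp_decomp: "supp x \<Longrightarrow> x = (\<lambda>\<mu> \<kappa>. \<Sum>p\<in>Lt \<times> Lt. x (fst p) (snd p) * Eb p \<mu> \<kappa>)"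
proof (intro ext)
  fix \<mu> \<kappa> assume sx: "supp x"
  have "(\<Sum>p\<in>Lt \<times> Lt. x (fst p) (snd p) * Eb p \<mu> \<kappa>) = (\<Sum>p\<in>Lt \<times> Lt. if p = (\<mu>, \<kappa>) then x \<mu> \<kappa> else 0)"
    unfolding Eb_def by (intro sum.cong refl) auto
  also have "\<dots> = x \<mu> \<kappa>" using sx finL unfolding supp_def by (auto simp: sum.delta')
  finally show "x \<mu> \<kappa> = (\<Sum>p\<in>Lt \<times> Lt. x (fst p) (snd p) * Eb p \<mu> \<kappa>)" by simp
qed

lemma ex_lin: "supp x \<Longrightarrow> ex t x \<mu> \<kappa> = (\<Sum>p\<in>Lt \<times> Lt. x (fst p) (snd p) * ex t (Eb p) \<mu> \<kappa>)"
proof -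
  assume sx: "supp x"
  have "ex t x = ex t (\<lambda>\<mu> \<kappa>. \<Sum>p\<in>Lt \<times> Lt. x (fst p) (snd p) * Eb p \<mu> \<kappa>)"
    using supp_decomp[OF sx] by simp
  also have "\<dots> = (\<lambda>\<mu> \<kappa>. \<Sum>p\<in>Lt \<times> Lt. ex t (\<lambda>\<mu> \<kappa>. x (fst p) (snd p) * Eb p \<mu> \<kappa>) \<mu> \<kappa>)"
    using finL by (intro ex_sum) (auto intro!: supp_scale supp_Eb)
  also have "\<dots> = (\<lambda>\<mu> \<kappa>. \<Sum>p\<in>Lt \<times> Lt. x (fst p) (snd p) * ex t (Eb p) \<mu> \<kappa>)"
    by (intro ext sum.cong refl) (auto simp: ex_scale supp_Eb)
  finally show ?thesis by simp
qed

lemma cont_En: "continuous_on S En"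
  unfolding En_def by (intro continuous_intros cont_coord2)

definition Sph :: "cmat set" where "Sph = {x. supp x \<and> En x = 1}"

lemma Lt_ne: "Lt \<noteq> {}"
proof -
  have "replicate (length N) 1 \<in> Lt" using Npos unfolding lattice_def by auto
  then show ?thesis by blast
qed

lemma compact_Sph: "compact Sph"
proof -
  define Box :: "cmat set" where
    "Box = PiE UNIV (\<lambda>\<mu>. PiE UNIV (\<lambda>\<kappa>. if \<mu> \<in> Lt \<and> \<kappa> \<in> Lt then cball 0 1 else {0}))"
  have cb: "compact Box" unfolding Box_def
    by (intro compact_PiE_UNIV) auto
  have csupp: "closed {x::cmat. supp x}"
  proof -
    have "{x::cmat. supp x} = (\<Inter>p\<in>{p. fst p \<notin> Lt \<or> snd p \<notin> Lt}. {x. x (fst p) (snd p) = 0})"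
      unfolding supp_def by auto
    also have "closed \<dots>"
      by (intro closed_INT ballI closed_Collect_eq cont_coord2 continuous_on_const)
    finally show ?thesis .
  qed
  have cE: "closed {x::cmat. En x = 1}"
    by (intro closed_Collect_eq cont_En continuous_on_const)
  have sub: "Sph \<subseteq> Box"
  proof
    fix x assume "x \<in> Sph"
    then have sx: "supp x" and e: "En x = 1" by (auto simp: Sph_def)
    have "cmod (x \<mu> \<kappa>) \<le> 1" if "\<mu> \<in> Lt" "\<kappa> \<in> Lt" for \<mu> \<kappa>
    proof -
      have "(cmod (x \<mu> \<kappa>))\<^sup>2 \<le> (\<Sum>\<kappa>\<in>Lt. (cmod (x \<mu> \<kappa>))\<^sup>2)"
        using that finL by (intro member_le_sum) auto
      also have "\<dots> \<le> En x" unfolding En_def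
        using that finL by (intro member_le_sum[where f="\<lambda>\<mu>. \<Sum>\<kappa>\<in>Lt. (cmod (x \<mu> \<kappa>))\<^sup>2"]) (auto intro: sum_nonneg)
      finally show ?thesis using e by (simp add: power_le_one_iff abs_le_square_iff)
    qed
    then show "x \<in> Box" unfolding Box_def using sx unfolding supp_def by auto
  qed
  have "Sph = Box \<inter> ({x. supp x} \<inter> {x. En x = 1})" using sub unfolding Sph_def by auto
  then show ?thesis using cb csupp cE by (simp add: compact_Int_closed closed_Int)
qed

lemma Sph_ne: "Sph \<noteq> {}"
proof -
  obtain \<nu> where nu: "\<nu> \<in> Lt" using Lt_ne by blast
  have "supp (Eb (\<nu>, \<nu>))" using nu by (intro supp_Eb) auto
  moreover have "En (Eb (\<nu>, \<nu>)) = 1"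
  proof -
    have "En (Eb (\<nu>, \<nu>)) = (\<Sum>\<mu>\<in>Lt. \<Sum>\<kappa>\<in>Lt. if \<mu> = \<nu> \<and> \<kappa> = \<nu> then 1 else 0)"
      unfolding En_def Eb_def by (intro sum.cong refl) auto
    also have "\<dots> = (\<Sum>\<mu>\<in>Lt. if \<mu> = \<nu> then 1 else 0)"
      using nu by (intro sum.cong refl) (auto simp: finL sum.delta')
    also have "\<dots> = 1" using nu finL by (simp add: sum.delta')
    finally show ?thesis .
  qed
  ultimately show ?thesis unfolding Sph_def by blast
qed

lemma cont_F: "continuous_on Sph (\<lambda>x. En (ex 1 x))"
proof -
  have "continuous_on Sph (\<lambda>x. En (\<lambda>\<mu> \<kappa>. \<Sum>p\<in>Lt \<times> Lt. x (fst p) (snd p) * ex 1 (Eb p) \<mu> \<kappa>))"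
    unfolding En_def by (intro continuous_intros cont_coord2)
  moreover have "\<And>x. x \<in> Sph \<Longrightarrow> En (\<lambda>\<mu> \<kappa>. \<Sum>p\<in>Lt \<times> Lt. x (fst p) (snd p) * ex 1 (Eb p) \<mu> \<kappa>) = En (ex 1 x)"
    unfolding Sph_def using ex_lin by (auto intro!: arg_cong[of _ _ En] ext)
  ultimately show ?thesis using continuous_on_cong by fastforce
qed

lemma contraction: "\<exists>q. 0 \<le> q \<and> q < 1 \<and> (\<forall>a. supp a \<longrightarrow> En (ex 1 a) \<le> q * En a)"
proof -
  obtain x0 where x0: "x0 \<in> Sph" and mx: "\<forall>y\<in>Sph. En (ex 1 y) \<le> En (ex 1 x0)"
    using continuous_attains_sup[OF compact_Sph Sph_ne cont_F] by blast
  define q where "q = En (ex 1 x0)"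
  have q1: "q < 1" unfolding q_def using strict_contr[of x0] x0 unfolding Sph_def by auto
  have q0: "0 \<le> q" unfolding q_def by (rule En_nonneg)
  have "En (ex 1 a) \<le> q * En a" if sa: "supp a" for a
  proof (cases "En a = 0")
    case True
    then have "a = (\<lambda>_ _. 0)" using En_zero sa by blast
    then show ?thesis by (simp add: ex_zero_mat En_def)
  next
    case False
    then have ep: "En a > 0" using En_nonneg[of a] by simp
    define c where "c = 1 / sqrt (En a)"
    have c2: "c\<^sup>2 * En a = 1" unfolding c_def using ep by (simp add: power_divide)
    define x where "x = (\<lambda>\<mu> \<kappa>. complex_of_real c * a \<mu> \<kappa>)"
    have sxx: "supp x" unfolding x_def by (rule supp_scale[OF sa])
    have "En x = 1" unfolding x_def En_scale using c2 by simp
    then have "x \<in> Sph" using sxx unfolding Sph_def by simp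
    then have "En (ex 1 x) \<le> q" using mx unfolding q_def by blast
    moreover have "En (ex 1 x) = c\<^sup>2 * En (ex 1 a)" unfolding x_def ex_scale[OF sa] En_scale by simp
    ultimately have "c\<^sup>2 * En (ex 1 a) \<le> q * (c\<^sup>2 * En a)" using c2 by simp
    moreover have "c\<^sup>2 > 0" unfolding c_def using ep by simp
    ultimately show ?thesis by (simp add: algebra_simps)
  qed
  then show ?thesis using q0 q1 by blast
qed

lemma entry_le_En: "supp a \<Longrightarrow> (cmod (a \<mu> \<kappa>))\<^sup>2 \<le> En a"
proof (cases "\<mu> \<in> Lt \<and> \<kappa> \<in> Lt")
  case True
  have "(cmod (a \<mu> \<kappa>))\<^sup>2 \<le> (\<Sum>\<kappa>\<in>Lt. (cmod (a \<mu> \<kappa>))\<^sup>2)"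
    using True finL by (intro member_le_sum) auto
  also have "\<dots> \<le> En a" unfolding En_def
    using True finL by (intro member_le_sum[where f="\<lambda>\<mu>. \<Sum>\<kappa>\<in>Lt. (cmod (a \<mu> \<kappa>))\<^sup>2"]) (auto intro: sum_nonneg)
  finally show ?thesis .
next
  case False
  assume "supp a"
  then show ?thesis using False En_nonneg[of a] unfolding supp_def by auto
qed

lemma decay:
  assumes sa: "supp a"
  shows "\<exists>C c. c > 0 \<and> (\<forall>t\<ge>0. \<forall>\<mu> \<kappa>. cmod (ex t a \<mu> \<kappa>) \<le> C * exp (- c * t))"
proof -
  obtain q where q: "0 \<le> q" "q < 1" "\<And>a. supp a \<Longrightarrow> En (ex 1 a) \<le> q * En a"
    using contraction by blast
  define \<rho> where "\<rho> = max q (1/2)"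
  have r: "0 < \<rho>" "\<rho> < 1" "q \<le> \<rho>" unfolding \<rho>_def using q by auto
  have step: "\<forall>t\<ge>real n. En (ex t a) \<le> \<rho> ^ n * En a" for n
  proof (induction n)
    case 0 then show ?case using En_mono[OF sa] by simp
  next
    case (Suc n)
    show ?case
    proof (intro allI impI)
      fix t assume t: "real (Suc n) \<le> t"
      have "ex t a = ex 1 (ex (t - 1) a)" using ex_semigroup[OF sa, of 1 "t - 1"] by simp
      then have "En (ex t a) \<le> q * En (ex (t - 1) a)" using q(3)[OF ex_supp[OF sa]] by simp
      also have "\<dots> \<le> \<rho> * En (ex (t - 1) a)" using r En_nonneg by (intro mult_right_mono) auto
      also have "\<dots> \<le> \<rho> * (\<rho> ^ n * En a)" using Suc.IH t r by (intro mult_left_mono) auto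
      finally show "En (ex t a) \<le> \<rho> ^ Suc n * En a" by simp
    qed
  qed
  define c where "c = - ln \<rho> / 2"
  define C where "C = sqrt (En a / \<rho>)"
  have cpos: "c > 0" unfolding c_def using r by simp
  have "cmod (ex t a \<mu> \<kappa>) \<le> C * exp (- c * t)" if t: "t \<ge> 0" for t \<mu> \<kappa>
  proof -
    define n where "n = nat \<lfloor>t\<rfloor>"
    have n1: "real n \<le> t" "t - 1 \<le> real n" unfolding n_def using t by linarith+
    have "(cmod (ex t a \<mu> \<kappa>))\<^sup>2 \<le> En (ex t a)" by (rule entry_le_En[OF ex_supp[OF sa]])
    also have "\<dots> \<le> \<rho> ^ n * En a" using step n1 by blast
    also have "\<dots> \<le> (exp (- c * t))\<^sup>2 / \<rho> * En a"
    proof (rule mult_right_mono[OF _ En_nonneg])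
    have "\<rho> ^ n = \<rho> powr real n" using r by (simp add: powr_realpow)
    also have "\<rho> powr real n \<le> \<rho> powr (t - 1)" using r n1 by (intro powr_mono') auto
    also have "\<rho> powr (t - 1) = exp (t * ln \<rho>) / \<rho>"
      using r by (simp add: powr_def exp_diff algebra_simps)
    also have "exp (t * ln \<rho>) = (exp (- c * t))\<^sup>2"
      unfolding c_def by (simp add: power2_eq_square exp_add[symmetric])
    finally show "\<rho> ^ n \<le> (exp (- c * t))\<^sup>2 / \<rho>" .
    qed
    finally have A: "(cmod (ex t a \<mu> \<kappa>))\<^sup>2 \<le> (exp (- c * t))\<^sup>2 / \<rho> * En a" .
    have B: "(C * exp (- c * t))\<^sup>2 = (exp (- c * t))\<^sup>2 / \<rho> * En a"
      unfolding C_def using r En_nonneg[of a] by (simp add: power_mult_distrib)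
    have "(cmod (ex t a \<mu> \<kappa>))\<^sup>2 \<le> (C * exp (- c * t))\<^sup>2" using A B by simp
    then show ?thesis unfolding C_def by (rule power2_le_imp_le) (use r En_nonneg[of a] in simp)
  qed
  then show ?thesis using cpos by blast
qed

end



context lind begin

lemma integral_R:
  assumes sR: "supp R" and sS: "supp S" and eq: "lf R = (\<lambda>\<mu> \<kappa>. - S \<mu> \<kappa>)"
  shows "integral {0..} (\<lambda>t. ex t S \<mu> \<kappa>) = R \<mu> \<kappa>"
proof -
  define F where "F = (\<lambda>t. ex t S \<mu> \<kappa>)"
  define G where "G = (\<lambda>t. ex t R \<mu> \<kappa>)"
  have exl: "ex t (lf R) = (\<lambda>\<mu> \<kappa>. - ex t S \<mu> \<kappa>)" for t
  proof -
    have "ex t (lf R) = ex t (\<lambda>\<mu> \<kappa>. (-1) * S \<mu> \<kappa>)" unfolding eq by simp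
    also have "\<dots> = (\<lambda>\<mu> \<kappa>. (-1) * ex t S \<mu> \<kappa>)" by (rule ex_scale[OF sS])
    finally show ?thesis by simp
  qed
  have dG: "(G has_vector_derivative - F t) (at t within A)" for t A
    using ex_deriv[OF sR, of \<mu> \<kappa> t A] unfolding G_def F_def exl by simp
  have G0: "G 0 = R \<mu> \<kappa>" unfolding G_def ex_zero ..
  have intk: "(F has_integral (R \<mu> \<kappa> - G (real k))) {0..real k}" for k :: nat
  proof -
    have "((\<lambda>t. - F t) has_integral (G (real k) - G 0)) {0..real k}"
      by (intro fundamental_theorem_of_calculus dG) auto
    from has_integral_neg[OF this] show ?thesis unfolding G0 by simp
  qed
  obtain C c where Cc: "c > 0" "\<And>t \<mu> \<kappa>. t \<ge> 0 \<Longrightarrow> cmod (ex t S \<mu> \<kappa>) \<le> C * exp (- c * t)"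
    using decay[OF sS] by blast
  obtain C' c' where Cc': "c' > 0" "\<And>t \<mu> \<kappa>. t \<ge> 0 \<Longrightarrow> cmod (ex t R \<mu> \<kappa>) \<le> C' * exp (- c' * t)"
    using decay[OF sR] by blast
  define f where "f = (\<lambda>k::nat. \<lambda>t. if t \<in> {0..real k} then F t else 0)"
  define h where "h = (\<lambda>t. C * exp (- c * t))"
  have fk: "(f k has_integral (R \<mu> \<kappa> - G (real k))) {0..}" for k
    unfolding f_def by (subst has_integral_restrict) (auto intro: intk)
  have hint: "h integrable_on {0..}"
  proof -
    have e: "(\<lambda>t. exp (- c * t)) integrable_on {0..}"
      using integrable_on_exp_minus_to_infinity[OF Cc(1), of 0] by simp
    then show ?thesis unfolding h_def using integrable_cmul[OF e, of C] by simp
  qed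
  have le: "norm (f k t) \<le> h t" if "t \<in> {0..}" for k t
  proof -
    have "cmod (F t) \<le> h t" using Cc(2)[of t] that unfolding F_def h_def by auto
    moreover have "0 \<le> h t" using norm_ge_zero calculation by (rule order_trans)
    ultimately show ?thesis unfolding f_def by auto
  qed
  have conv: "(\<lambda>k. f k t) \<longlonglongrightarrow> F t" if "t \<in> {0..}" for t
  proof (rule tendsto_eventually)
    obtain k0 :: nat where k0: "t \<le> real k0" using real_arch_simple by blast
    show "\<forall>\<^sub>F k in sequentially. f k t = F t"
      unfolding eventually_sequentially
    proof (intro exI[of _ k0] allI impI)
      fix n assume "k0 \<le> n"
      then have "t \<le> real n" using k0 by (meson of_nat_le_iff order_trans)
      then show "f n t = F t" using that unfolding f_def by simp
    qed
  qed
  have dc: "(\<lambda>k. integral {0..} (f k)) \<longlonglongrightarrow> integral {0..} F"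
    proof -
    have fi: "\<And>k. f k integrable_on {0..}" using fk unfolding integrable_on_def by blast
    show ?thesis by (rule dominated_convergence(2)[OF fi hint le conv])
  qed
  have "(\<lambda>k. integral {0..} (f k)) = (\<lambda>k. R \<mu> \<kappa> - G (real k))"
    by (intro ext integral_unique fk)
  moreover have "(\<lambda>k. R \<mu> \<kappa> - G (real k)) \<longlonglongrightarrow> R \<mu> \<kappa> - 0"
  proof (intro tendsto_diff tendsto_const)
    have ep: "(\<lambda>k. exp (- c') ^ k) \<longlonglongrightarrow> 0" using Cc'(1) by (intro LIMSEQ_power_zero) simp
    have "(\<lambda>k. C' * exp (- c' * real k)) \<longlonglongrightarrow> C' * 0"
      unfolding mult.commute[of "- c'"] exp_of_nat_mult by (intro tendsto_mult tendsto_const ep)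
    then have "(\<lambda>k. C' * exp (- c' * real k)) \<longlonglongrightarrow> 0" by simp
    then show "(\<lambda>k. G (real k)) \<longlonglongrightarrow> 0"
    proof -
      have "\<forall>k. norm (G (real k)) \<le> C' * exp (- c' * real k)" using Cc'(2) unfolding G_def by simp
      from Lim_null_comparison[OF always_eventually[OF this] \<open>(\<lambda>k. C' * exp (- c' * real k)) \<longlonglongrightarrow> 0\<close>]
      show ?thesis .
    qed
  qed
  ultimately have "(\<lambda>k. integral {0..} (f k)) \<longlonglongrightarrow> R \<mu> \<kappa>" by simp
  with dc have "integral {0..} F = R \<mu> \<kappa>" using LIMSEQ_unique by blast
  then show ?thesis unfolding F_def .
qed

end



context lind begin

lemma shift_ne: "\<kappa> \<in> Lt \<Longrightarrow> shift \<kappa> \<noteq> \<kappa>"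
  using shift_nth'[of \<kappa> 0] by auto

lemma unshift_first: "\<kappa> \<in> Lt \<Longrightarrow> unshift \<kappa> ! 0 = \<kappa>!0 - 1" using unshift_nth'[of \<kappa> 0] by simp
lemma shift_first: "\<kappa> \<in> Lt \<Longrightarrow> shift \<kappa> ! 0 = \<kappa>!0 + 1" using shift_nth'[of \<kappa> 0] by simp

lemma NNcase: "\<mu> \<in> Lt \<Longrightarrow> \<kappa> \<in> NN N \<mu> \<Longrightarrow> \<kappa> = shift \<mu> \<or> \<mu> = shift \<kappa> \<or> \<kappa>!0 = \<mu>!0"
proof -
  assume m: "\<mu> \<in> Lt" and k: "\<kappa> \<in> NN N \<mu>"
  have kL: "\<kappa> \<in> Lt" using k NN_sub by blast
  have mk: "\<mu> \<in> NN N \<kappa>" using NN_sym[OF m k] .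
  show ?thesis using NN_first'[OF m k] NN_up'[OF m k] NN_up'[OF kL mk] by auto
qed

lemma Gdiag1: "\<mu> \<in> Lt \<Longrightarrow> shift \<mu> \<in> NN N \<mu> \<longleftrightarrow> \<mu>!0 < N!0"
  using shift_NN' shift_in_lattice' NN_sub by blast

lemma Gdiag2: "\<mu> \<in> Lt \<Longrightarrow> unshift \<mu> \<in> NN N \<mu> \<longleftrightarrow> \<mu>!0 \<ge> 2"
proof
  assume m: "\<mu> \<in> Lt" and "unshift \<mu> \<in> NN N \<mu>"
  then show "\<mu>!0 \<ge> 2" using unshift_in_lattice' NN_sub by blast
next
  assume m: "\<mu> \<in> Lt" and "\<mu>!0 \<ge> 2"
  then have u: "unshift \<mu> \<in> Lt" using unshift_in_lattice' by blast
  have "shift (unshift \<mu>) \<in> NN N (unshift \<mu>)" using shift_NN'[OF u] shift_unshift'[OF m] m by simp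
  then show "unshift \<mu> \<in> NN N \<mu>" using NN_sym[OF u] shift_unshift'[OF m] by simp
qed

lemma GA:
  assumes m: "\<mu> \<in> Lt" and k: "\<kappa> \<in> Lt" and ne: "\<mu> \<noteq> \<kappa>"
  shows "shift \<kappa> \<in> NN N \<mu> \<longleftrightarrow> unshift \<mu> \<in> NN N \<kappa>"
proof
  assume A: "shift \<kappa> \<in> NN N \<mu>"
  have sk: "shift \<kappa> \<in> Lt" using A NN_sub by blast
  have m2: "\<mu>!0 \<ge> 2"
  proof (rule ccontr)
    assume "\<not> 2 \<le> \<mu>!0"
    then have m1: "\<mu>!0 = 1" using first_bounds'[OF m] by simp
    have "shift \<kappa> ! 0 = \<mu>!0 + 1" using NN_first'[OF m A] shift_first[OF k] first_bounds'[OF k] m1 by auto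
    then have "shift \<kappa> = shift \<mu>" by (rule NN_up'[OF m A])
    then show False using shift_inj'[OF k m] ne by simp
  qed
  have u: "unshift \<mu> \<in> Lt" using unshift_in_lattice'[OF m] m2 by simp
  have "shift \<kappa> \<in> NN N (shift (unshift \<mu>))" using A shift_unshift'[OF m] by simp
  then have "\<kappa> \<in> NN N (unshift \<mu>)"
    using NN_shift_shift'[OF u k _ sk] shift_unshift'[OF m] m by simp
  then show "unshift \<mu> \<in> NN N \<kappa>" using NN_sym[OF u] by blast
next
  assume B: "unshift \<mu> \<in> NN N \<kappa>"
  have u: "unshift \<mu> \<in> Lt" using B NN_sub by blast
  have m2: "\<mu>!0 \<ge> 2" using unshift_in_lattice'[OF m] u by simp
  have kB: "\<kappa> \<in> NN N (unshift \<mu>)" using NN_sym[OF k B] .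
  have sk: "shift \<kappa> \<in> Lt"
  proof (rule ccontr)
    assume "shift \<kappa> \<notin> Lt"
    then have kN: "\<kappa>!0 = N!0" using shift_in_lattice'[OF k] first_bounds'[OF k] by simp
    have "\<kappa>!0 = unshift \<mu> ! 0 + 1"
      using NN_first'[OF u kB] unshift_first[OF m] first_bounds'[OF m] kN m2 by auto
    then have "\<kappa> = shift (unshift \<mu>)" by (rule NN_up'[OF u kB])
    then show False using shift_unshift'[OF m] ne by simp
  qed
  have "shift \<kappa> \<in> NN N (shift (unshift \<mu>))"
    using NN_shift_shift'[OF u k _ sk] kB shift_unshift'[OF m] m by simp
  then show "shift \<kappa> \<in> NN N \<mu>" using shift_unshift'[OF m] by simp
qed

definition RR :: "(nat \<Rightarrow> complex) \<Rightarrow> complex \<Rightarrow> cmat" where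
  "RR xv y = (\<lambda>\<mu> \<kappa>. if \<mu> \<in> Lt \<and> \<kappa> \<in> Lt then
      (if \<mu> = \<kappa> then xv (\<mu>!0) else if \<mu> = shift \<kappa> then y else if \<kappa> = shift \<mu> then - y else 0) else 0)"

lemma RR_supp: "supp (RR xv y)" unfolding supp_def RR_def by auto

lemma shift_eq_iff_unshift: "\<xi> \<in> Lt \<Longrightarrow> \<kappa> \<in> Lt \<Longrightarrow> \<kappa> = shift \<xi> \<longleftrightarrow> (\<xi> = unshift \<kappa> \<and> unshift \<kappa> \<in> Lt)"
  by (metis shift_unshift' unshift_shift')

lemma RR_col:
  assumes "\<xi> \<in> Lt" "\<kappa> \<in> Lt"
  shows "RR xv y \<xi> \<kappa> = (if \<xi> = \<kappa> then xv (\<kappa>!0) else 0) + (if \<xi> = shift \<kappa> then y else 0)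
     + (if \<xi> = unshift \<kappa> \<and> unshift \<kappa> \<in> Lt then - y else 0)"
proof -
  have d1: "shift \<kappa> \<noteq> \<kappa>" using shift_ne[OF assms(2)] .
  have d2: "unshift \<kappa> \<noteq> \<kappa>" if "unshift \<kappa> \<in> Lt" using that unshift_first[OF assms(2)] unshift_in_lattice'[OF assms(2)] by force
  have d3: "unshift \<kappa> \<noteq> shift \<kappa>" using unshift_first[OF assms(2)] shift_first[OF assms(2)] by force
  show ?thesis unfolding RR_def using assms d1 d2 d3 shift_eq_iff_unshift[OF assms] by auto
qed

lemma RR_row:
  assumes "\<mu> \<in> Lt" "\<xi> \<in> Lt"
  shows "RR xv y \<mu> \<xi> = (if \<xi> = \<mu> then xv (\<mu>!0) else 0) + (if \<xi> = unshift \<mu> \<and> unshift \<mu> \<in> Lt then y else 0)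
     + (if \<xi> = shift \<mu> then - y else 0)"
proof -
  have d1: "shift \<mu> \<noteq> \<mu>" using shift_ne[OF assms(1)] .
  have d2: "unshift \<mu> \<noteq> \<mu>" if "unshift \<mu> \<in> Lt" using that unshift_first[OF assms(1)] unshift_in_lattice'[OF assms(1)] by force
  have d3: "unshift \<mu> \<noteq> shift \<mu>" using unshift_first[OF assms(1)] shift_first[OF assms(1)] by force
  show ?thesis unfolding RR_def using assms d1 d2 d3 shift_eq_iff_unshift[OF assms(2,1)] by auto
qed

lemma sum_NN_delta: "(\<Sum>\<xi>\<in>NN N \<mu>. if \<xi> = c then v else 0) = (if c \<in> NN N \<mu> then v else 0)"
  using finite_NN by (simp add: sum.delta')

lemma sum_NN_delta2: "(\<Sum>\<xi>\<in>NN N \<mu>. if \<xi> = c \<and> c \<in> Lt then v else 0) = (if c \<in> NN N \<mu> then v else 0)"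
proof -
  have "(\<Sum>\<xi>\<in>NN N \<mu>. if \<xi> = c \<and> c \<in> Lt then v else 0) = (\<Sum>\<xi>\<in>NN N \<mu>. if \<xi> = c then v else 0)"
    using NN_sub by (intro sum.cong refl) auto
  then show ?thesis by (simp add: sum_NN_delta)
qed

lemma sumA:
  assumes "\<mu> \<in> Lt" "\<kappa> \<in> Lt"
  shows "(\<Sum>\<xi>\<in>NN N \<mu>. RR xv y \<xi> \<kappa>) = (if \<kappa> \<in> NN N \<mu> then xv (\<kappa>!0) else 0)
     + (if shift \<kappa> \<in> NN N \<mu> then y else 0) + (if unshift \<kappa> \<in> NN N \<mu> then - y else 0)"
proof -
  have "(\<Sum>\<xi>\<in>NN N \<mu>. RR xv y \<xi> \<kappa>) = (\<Sum>\<xi>\<in>NN N \<mu>. (if \<xi> = \<kappa> then xv (\<kappa>!0) else 0) + (if \<xi> = shift \<kappa> then y else 0)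
     + (if \<xi> = unshift \<kappa> \<and> unshift \<kappa> \<in> Lt then - y else 0))"
    using NN_sub assms by (intro sum.cong refl RR_col) auto
  then show ?thesis by (simp only: sum.distrib sum_NN_delta sum_NN_delta2)
qed

lemma sumB:
  assumes "\<mu> \<in> Lt" "\<kappa> \<in> Lt"
  shows "(\<Sum>\<xi>\<in>NN N \<kappa>. RR xv y \<mu> \<xi>) = (if \<mu> \<in> NN N \<kappa> then xv (\<mu>!0) else 0)
     + (if unshift \<mu> \<in> NN N \<kappa> then y else 0) + (if shift \<mu> \<in> NN N \<kappa> then - y else 0)"
proof -
  have "(\<Sum>\<xi>\<in>NN N \<kappa>. RR xv y \<mu> \<xi>) = (\<Sum>\<xi>\<in>NN N \<kappa>. (if \<xi> = \<mu> then xv (\<mu>!0) else 0) + (if \<xi> = unshift \<mu> \<and> unshift \<mu> \<in> Lt then y else 0)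
     + (if \<xi> = shift \<mu> then - y else 0))"
    using NN_sub assms by (intro sum.cong refl RR_row) auto
  then show ?thesis by (simp only: sum.distrib sum_NN_delta sum_NN_delta2)
qed

lemma H_diag:
  assumes "\<mu> \<in> Lt"
  shows "hs (RR xv y) \<mu> \<mu> = 2 * y * (of_bool (\<mu>!0 < N!0) - of_bool (\<mu>!0 \<ge> 2))"
  unfolding hs_def using assms sumA[OF assms assms] sumB[OF assms assms] Gdiag1[OF assms] Gdiag2[OF assms] NN_irrefl
  by simp

lemma H_off:
  assumes m: "\<mu> \<in> Lt" and k: "\<kappa> \<in> Lt" and ne: "\<mu> \<noteq> \<kappa>"
  shows "hs (RR xv y) \<mu> \<kappa> = (if \<kappa> = shift \<mu> then xv (\<mu>!0 + 1) - xv (\<mu>!0)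
      else if \<mu> = shift \<kappa> then xv (\<kappa>!0) - xv (\<kappa>!0 + 1) else 0)"
proof -
  have g1: "shift \<kappa> \<in> NN N \<mu> \<longleftrightarrow> unshift \<mu> \<in> NN N \<kappa>" by (rule GA[OF m k ne])
  have g2: "shift \<mu> \<in> NN N \<kappa> \<longleftrightarrow> unshift \<kappa> \<in> NN N \<mu>" using GA[OF k m] ne by blast
  have sy: "\<mu> \<in> NN N \<kappa> \<longleftrightarrow> \<kappa> \<in> NN N \<mu>" using NN_sym_iff m k by blast
  have "hs (RR xv y) \<mu> \<kappa> = (if \<kappa> \<in> NN N \<mu> then xv (\<kappa>!0) - xv (\<mu>!0) else 0)"
    unfolding hs_def using m k sumA[OF m k] sumB[OF m k] g1 g2 sy by simp
  also have "\<dots> = (if \<kappa> = shift \<mu> then xv (\<mu>!0 + 1) - xv (\<mu>!0)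
      else if \<mu> = shift \<kappa> then xv (\<kappa>!0) - xv (\<kappa>!0 + 1) else 0)"
  proof (cases "\<kappa> \<in> NN N \<mu>")
    case True
    then show ?thesis using NNcase[OF m True] shift_first[OF m] shift_first[OF k] by auto
  next
    case False
    have "\<kappa> \<noteq> shift \<mu>" using False shift_NN'[OF m] k by auto
    moreover have "\<mu> \<noteq> shift \<kappa>" using False shift_NN'[OF k] m NN_sym[OF k] by auto
    ultimately show ?thesis using False by simp
  qed
  finally show ?thesis .
qed

end



context lind begin

definition Den :: real where "Den = (b * (real (N!0) - 1) + zl + zr) * zl * zr + zl + zr"

lemma Den_pos: "Den > 0"
proof -
  have "0 \<le> b * (real (N!0) - 1)" using bpos N0 by simp
  then have h: "0 < b * (real (N!0) - 1) + zl + zr" using zl zr by simp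
  have "0 < (b * (real (N!0) - 1) + zl + zr) * zl * zr" using h zl zr by simp
  then show ?thesis unfolding Den_def using zl zr by linarith
qed

definition jj :: "real \<Rightarrow> real \<Rightarrow> real" where "jj ail air = (ail * zr - air * zl) / Den"

definition xf :: "real \<Rightarrow> real \<Rightarrow> nat \<Rightarrow> real" where
  "xf ail air k = (ail - jj ail air) / zl - jj ail air * (b * (real k - 1) + (if k \<ge> 2 then zl else 0) + (if k = N!0 then zr else 0))"

lemma xf1: "zl * xf ail air 1 = ail - jj ail air"
  unfolding xf_def using zl N0 by (simp add: field_simps)

lemma xfN: "zr * xf ail air (N!0) = air + jj ail air"
proof -
  let ?j = "jj ail air"
  have jD: "?j * Den = ail * zr - air * zl" unfolding jj_def using Den_pos by simp
  have "zl * (zr * xf ail air (N!0)) = zr * (ail - ?j) - zl * zr * ?j * (b * (real (N!0) - 1) + zl + zr)"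
    unfolding xf_def using zl N0 by (simp add: field_simps)
  also have "\<dots> = zl * (air + ?j)" using jD unfolding Den_def by (simp add: algebra_simps)
  finally show ?thesis using zl by simp
qed

lemma xfstep: "1 \<le> k \<Longrightarrow> k < N!0 \<Longrightarrow>
   xf ail air k - xf ail air (k + 1) = jj ail air * (b + (if k = 1 then zl else 0) + (if k + 1 = N!0 then zr else 0))"
proof -
  assume k: "1 \<le> k" "k < N!0"
  show ?thesis
  proof (cases "k + 1 = N!0")
    case True
    then have r: "real (N!0) = real k + 1" by simp
    show ?thesis unfolding xf_def using k True by (cases "k = 1") (auto simp: r algebra_simps)
  next
    case False
    show ?thesis unfolding xf_def using k False by (cases "k = 1") (auto simp: algebra_simps)
  qed
qed

definition Rm :: "real \<Rightarrow> real \<Rightarrow> cmat" where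
  "Rm ail air = RR (\<lambda>k. complex_of_real (xf ail air k)) (\<i> * complex_of_real (jj ail air))"

definition Sm :: "real \<Rightarrow> real \<Rightarrow> cmat" where
  "Sm ail air = (\<lambda>\<mu> \<kappa>. 2 * complex_of_real ail * Pleft N \<mu> \<kappa> + 2 * complex_of_real air * Pright N \<mu> \<kappa>)"

lemma Sm_supp: "supp (Sm ail air)"
  unfolding supp_def Sm_def Pleft_def Pright_def msum_proj using slab_sub by auto

lemma S1_iff: "\<mu> \<in> Lt \<Longrightarrow> \<mu> \<in> S1 \<longleftrightarrow> \<mu>!0 = 1" by (simp add: slab_def)
lemma SN_iff: "\<mu> \<in> Lt \<Longrightarrow> \<mu> \<in> SN \<longleftrightarrow> \<mu>!0 = N!0" by (simp add: slab_def)

lemma lf_Rm_diag: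
  assumes m: "\<mu> \<in> Lt"
  shows "lf (Rm ail air) \<mu> \<mu> = - Sm ail air \<mu> \<mu>"
proof -
  let ?j = "jj ail air" and ?x = "xf ail air"
  let ?k = "\<mu>!0"
  have kb: "1 \<le> ?k" "?k \<le> N!0" using first_bounds'[OF m] by auto
  have R: "Rm ail air \<mu> \<mu> = of_real (?x ?k)" unfolding Rm_def RR_def using m by simp
  have H: "hs (Rm ail air) \<mu> \<mu> = 2 * (\<i> * of_real ?j) * (of_bool (?k < N!0) - of_bool (?k \<ge> 2))"
    unfolding Rm_def by (rule H_diag[OF m])
  have L: "lf (Rm ail air) \<mu> \<mu> = \<i> * (2 * (\<i> * of_real ?j) * (of_bool (?k < N!0) - of_bool (?k \<ge> 2)))
     - of_real zl * (2 * of_bool (?k = 1) * of_real (?x ?k)) - of_real zr * (2 * of_bool (?k = N!0) * of_real (?x ?k))"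
    unfolding lf_def H R using m S1_iff[OF m] SN_iff[OF m] by (simp add: of_bool_def)
  have S: "Sm ail air \<mu> \<mu> = 2 * of_real ail * of_bool (?k = 1) + 2 * of_real air * of_bool (?k = N!0)"
    unfolding Sm_def Pleft_def Pright_def msum_proj using S1_iff[OF m] SN_iff[OF m] m by simp
  show ?thesis
  proof (cases "?k = 1")
    case True
    then have "?k \<noteq> N!0" "?k < N!0" using N0 by auto
    moreover have "lf (Rm ail air) \<mu> \<mu> = - 2 * of_real ?j - 2 * of_real (zl * ?x 1)"
      unfolding L using True N0 by (simp add: algebra_simps)
    ultimately show ?thesis unfolding S xf1 using True by simp
  next
    case False
    note F = this
    show ?thesis
    proof (cases "?k = N!0")
      case True
      have "lf (Rm ail air) \<mu> \<mu> = 2 * of_real ?j - 2 * of_real (zr * ?x (N!0))"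
        unfolding L using True F N0 by (simp add: algebra_simps)
      then show ?thesis unfolding S xfN using True F by simp
    next
      case False
      then show ?thesis unfolding L S using F kb by simp
    qed
  qed
qed

lemma lf_Rm_off:
  assumes m: "\<mu> \<in> Lt" and k: "\<kappa> \<in> Lt" and ne: "\<mu> \<noteq> \<kappa>"
  shows "lf (Rm ail air) \<mu> \<kappa> = - Sm ail air \<mu> \<kappa>"
proof -
  let ?j = "jj ail air" and ?x = "xf ail air"
  have S: "Sm ail air \<mu> \<kappa> = 0" unfolding Sm_def Pleft_def Pright_def msum_proj using ne by simp
  have H: "hs (Rm ail air) \<mu> \<kappa> = (if \<kappa> = shift \<mu> then of_real (?x (\<mu>!0 + 1)) - of_real (?x (\<mu>!0))
      else if \<mu> = shift \<kappa> then of_real (?x (\<kappa>!0)) - of_real (?x (\<kappa>!0 + 1)) else 0)"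
    unfolding Rm_def by (rule H_off[OF m k ne])
  have L: "lf (Rm ail air) \<mu> \<kappa> = \<i> * hs (Rm ail air) \<mu> \<kappa>
      - (of_real zl * (of_bool (\<mu>!0 = 1) + of_bool (\<kappa>!0 = 1)) + of_real zr * (of_bool (\<mu>!0 = N!0) + of_bool (\<kappa>!0 = N!0))
         + of_real b) * Rm ail air \<mu> \<kappa>"
    unfolding lf_def using m k ne S1_iff[OF m] S1_iff[OF k] SN_iff[OF m] SN_iff[OF k]
    by (simp add: of_bool_def algebra_simps)
  show ?thesis
  proof (cases "\<kappa> = shift \<mu>")
    case True
    have kb: "1 \<le> \<mu>!0" "\<mu>!0 < N!0" using first_bounds'[OF m] shift_in_lattice'[OF m] True k by auto
    have k0: "\<kappa>!0 = \<mu>!0 + 1" using True shift_first[OF m] by simp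
    have nn: "\<mu> \<noteq> shift \<kappa>" using shift_first[OF k] k0 by auto
    have R: "Rm ail air \<mu> \<kappa> = - (\<i> * of_real ?j)" unfolding Rm_def RR_def using m k ne True nn by auto
    have st: "of_real (?x (\<mu>!0 + 1)) - of_real (?x (\<mu>!0)) =
       - (of_real (?j * (b + (if \<mu>!0 = 1 then zl else 0) + (if \<mu>!0 + 1 = N!0 then zr else 0))) :: complex)"
      using xfstep[OF kb, of ail air] by (metis minus_diff_eq of_real_diff)
    show ?thesis unfolding L H R S st using True k0 kb
      by (simp add: algebra_simps of_bool_def)
  next
    case False
    note F = this
    show ?thesis
    proof (cases "\<mu> = shift \<kappa>")
      case True
      have kb: "1 \<le> \<kappa>!0" "\<kappa>!0 < N!0" using first_bounds'[OF k] shift_in_lattice'[OF k] True m by auto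
      have m0: "\<mu>!0 = \<kappa>!0 + 1" using True shift_first[OF k] by simp
      have R: "Rm ail air \<mu> \<kappa> = \<i> * of_real ?j" unfolding Rm_def RR_def using m k ne True by auto
      have st: "of_real (?x (\<kappa>!0)) - of_real (?x (\<kappa>!0 + 1)) =
         (of_real (?j * (b + (if \<kappa>!0 = 1 then zl else 0) + (if \<kappa>!0 + 1 = N!0 then zr else 0))) :: complex)"
        using xfstep[OF kb, of ail air] by (metis of_real_diff)
      show ?thesis unfolding L H R S st using True F m0 kb
        by (simp add: algebra_simps of_bool_def)
    next
      case False
      have R: "Rm ail air \<mu> \<kappa> = 0" unfolding Rm_def RR_def using m k ne F False by auto
      show ?thesis unfolding L H R S using F False by simp
    qed
  qed
qed

lemma lf_Rm: "lf (Rm ail air) = (\<lambda>\<mu> \<kappa>. - Sm ail air \<mu> \<kappa>)"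
proof (intro ext)
  fix \<mu> \<kappa>
  show "lf (Rm ail air) \<mu> \<kappa> = - Sm ail air \<mu> \<kappa>"
  proof (cases "\<mu> \<in> Lt \<and> \<kappa> \<in> Lt")
    case True
    then show ?thesis using lf_Rm_diag lf_Rm_off by (cases "\<mu> = \<kappa>") auto
  next
    case False
    have "supp (lf (Rm ail air))" unfolding Rm_def by (intro lf_supp RR_supp)
    then show ?thesis using False Sm_supp unfolding supp_def by auto
  qed
qed

end



lemma prod_list_nth: "prod_list M = (\<Prod>i<length M. M!i)"
proof (induction M)
  case Nil then show ?case by simp
next
  case (Cons m M)
  then show ?case by (simp del: prod.lessThan_Suc add: prod.lessThan_Suc_shift)
qed

lemma card_slab1:
  assumes "length N \<ge> 1" "N!0 \<ge> 1"
  shows "card (slab N 1) = (\<Prod>n\<in>{1..<length N}. N!n)"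
proof -
  obtain m M where N: "N = m # M" using assms(1) by (cases N) auto
  have m: "m \<ge> 1" using assms(2) N by simp
  have "slab N 1 = (\<lambda>t. 1 # t) ` lattice M"
    unfolding N slab_def lattice_Cons using m by auto
  then have "card (slab N 1) = card (lattice M)" by (simp add: card_image inj_on_def)
  also have "\<dots> = prod_list M" by (rule card_lattice)
  also have "\<dots> = (\<Prod>i<length M. M!i)" by (rule prod_list_nth)
  also have "\<dots> = (\<Prod>n\<in>{1..<length N}. N!n)"
    unfolding N using prod.shift_bounds_Suc_ivl[of "\<lambda>n. (m # M) ! n" 0 "length M"]
    by (simp add: atLeast0LessThan)
  finally show ?thesis .
qed

theorem theorem4p1:
  fixes N :: "nat list" and ainl aoutl ainr aoutr \<beta> :: real
  assumes "length N \<ge> 1"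
    and "\<forall>i<length N. N!i \<ge> 1"
    and "N!0 \<ge> 2"
    and "ainl \<ge> 0" "aoutl \<ge> 0" "ainr \<ge> 0" "aoutr \<ge> 0" "\<beta> \<ge> 0"
    and "ainl + aoutl > 0" and "ainr + aoutr > 0"
  shows "current N (\<lambda>_. 0) ainl aoutl ainr aoutr \<beta> =
     2 * (ainl * aoutr - aoutl * ainr) * (\<Prod>n\<in>{1..<length N}. real (N!n))
     / ((\<beta> * (real (N!0) - 1) + (ainl + aoutl) + (ainr + aoutr)) * (ainl + aoutl) * (ainr + aoutr)
        + (ainl + aoutl) + (ainr + aoutr))"
proof -
  define zl where "zl = ainl + aoutl"
  define zr where "zr = ainr + aoutr"
  interpret lind N zl zr \<beta>
    using assms unfolding zl_def zr_def by unfold_locales auto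
  let ?R = "R_inf N (\<lambda>_. 0) ainl aoutl ainr aoutr \<beta>"
  have RR: "?R \<mu> \<kappa> = Rm ainl ainr \<mu> \<kappa>" for \<mu> \<kappa>
  proof -
    have "?R \<mu> \<kappa> = integral {0..} (\<lambda>t. exp_lindblad N (\<lambda>_. 0) zl zr \<beta> t (Sm ainl ainr) \<mu> \<kappa>)"
      unfolding R_inf_def Sm_def zl_def zr_def by simp
    also have "\<dots> = integral {0..} (\<lambda>t. ex t (Sm ainl ainr) \<mu> \<kappa>)"
      unfolding exp_lindblad_eq ..
    also have "\<dots> = Rm ainl ainr \<mu> \<kappa>"
      by (rule integral_R[OF _ Sm_supp lf_Rm]) (simp add: Rm_def RR_supp)
    finally show ?thesis .
  qed
  have tm: "cinner N (basis_vec (shift \<nu>)) (mvec N ?R (basis_vec \<nu>)) = \<i> * of_real (jj ainl ainr)"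
    if nu: "\<nu> \<in> S1" for \<nu>
  proof -
    have nL: "\<nu> \<in> Lt" using nu slab_sub by blast
    have n1: "\<nu>!0 = 1" using nu by (simp add: slab_def)
    have sL: "shift \<nu> \<in> Lt" using shift_in_lattice'[OF nL] n1 N0 by simp
    have mv: "mvec N ?R (basis_vec \<nu>) \<mu> = ?R \<mu> \<nu>" for \<mu>
      unfolding mvec_def basis_vec_def using nL finL by (simp add: sum.delta' if_distrib cong: if_cong)
    have "cinner N (basis_vec (shift \<nu>)) (mvec N ?R (basis_vec \<nu>)) = (\<Sum>\<mu>\<in>Lt. cnj (basis_vec (shift \<nu>) \<mu>) * ?R \<mu> \<nu>)"
      unfolding cinner_def mv ..
    also have "\<dots> = (\<Sum>\<mu>\<in>Lt. if \<mu> = shift \<nu> then ?R \<mu> \<nu> else 0)"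
      unfolding basis_vec_def by (intro sum.cong refl) auto
    also have "\<dots> = ?R (shift \<nu>) \<nu>" using sL finL by (simp add: sum.delta')
    also have "\<dots> = \<i> * of_real (jj ainl ainr)"
      unfolding RR Rm_def RR_def using nL sL shift_ne[OF nL] by simp
    finally show ?thesis .
  qed
  have "current N (\<lambda>_. 0) ainl aoutl ainr aoutr \<beta> = (\<Sum>\<nu>\<in>S1. 2 * jj ainl ainr)"
    unfolding current_def by (intro sum.cong refl) (simp add: tm)
  also have "\<dots> = 2 * jj ainl ainr * real (card S1)" by simp
  also have "card S1 = (\<Prod>n\<in>{1..<length N}. N!n)" using card_slab1 assms by simp
  also have "2 * jj ainl ainr * real (\<Prod>n\<in>{1..<length N}. N!n) =
     2 * (ainl * aoutr - aoutl * ainr) * (\<Prod>n\<in>{1..<length N}. real (N!n))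
     / ((\<beta> * (real (N!0) - 1) + (ainl + aoutl) + (ainr + aoutr)) * (ainl + aoutl) * (ainr + aoutr)
        + (ainl + aoutl) + (ainr + aoutr))"
    unfolding jj_def Den_def unfolding zl_def zr_def by (simp add: algebra_simps)
  finally show ?thesis .
qed



end
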